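(* Let $\lambda$ be a partition and set $R:=R_\lambda$. (i) The following three sets of tableaux of shape $\lambda$ coincide: the set of $\lambda$-keys $Y_\lambda(\pi)$ of the $R$-312-avoiding $R$-permutations $\pi$; the set of gapless $\lambda$-keys; and the set of $\lambda$-row end max tableaux $M_\lambda(\gamma)$ of the gapless $R$-tuples $\gamma$. (ii) An $R$-permutation $\pi$ is $R$-312-avoiding if and only if its $\lambda$-key $Y_\lambda(\pi)$ is gapless. (iii) If an $R$-permutation $\pi$ is $R$-312-avoiding, then $M_\lambda(\Psi_R(\pi))=Y_\lambda(\pi)$. Moreover, the map sending an $R$-chain $B$ to the $\lambda$-key whose column $j$ consists of the elements of $B_h$ (where $\zeta_j=q_h$; columns of length $n$ consist of $[n]$) restricts to a bijection from the set of $R$-rightmost clump deleting $R$-chains onto the set of gapless $\lambda$-keys, and $\gamma\mapsto M_\lambda(\gamma)$ is a bijection from the set of gapless $R$-tuples onto the set of $\lambda$-row end max tableaux of gapless $R$-tuples.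
   Context: Fix $n\ge1$; $[m]=\{1,\dots,m\}$. For a finite $Q\subseteq\mathbb{Z}$, $\mathrm{rank}^d(Q)$ is its $d$-th largest element. For $R\subseteq[n-1]$ with elements $q_1<\dots<q_r$, set $q_0:=0$, $q_{r+1}:=n$, $p_h:=q_h-q_{h-1}$; the $h$-th carrel is $(q_{h-1},q_h]=\{q_{h-1}+1,\dots,q_h\}$. An $R$-tuple is an $n$-tuple with entries in $[n]$; it is upper if $\nu_i\ge i$ for all $i$ and $R$-increasing if strictly increasing on each carrel. An $R$-permutation is an $R$-increasing permutation of $[n]$ (one-line notation). It is $R$-312-containing if there exist $h\in[r-1]$ and $1\le a\le q_h<b\le q_{h+1}<c\le n$ with $\pi_b<\pi_c<\pi_a$, and $R$-312-avoiding otherwise. An $R$-chain is $\emptyset=B_0\subset B_1\subset\cdots\subset B_{r+1}=[n]$ with $|B_h|=q_h$; the $R$-chain of $\pi$ is $B_h=\{\pi_1,\dots,\pi_{q_h}\}$. A clump of a finite set of integers is a maximal subset of consecutive integers; clumps are indexed $L_1,\dots,L_f$ increasingly. An $R$-chain is $R$-rightmost clump deleting if for each $h\in[r]$, writing $B_{h+1}=L_1\cup\cdots\cup L_f$ as clumps, there is $e\in[f]$ with $L_e\cup\cdots\cup L_f\supseteq B_{h+1}\setminus B_h\supseteq L_{e+1}\cup\cdots\cup L_f$. A gapless $R$-tuple is an upper $R$-increasing $R$-tuple $\gamma$ such that whenever $h\in[r]$ has $\gamma_{q_h}>\gamma_{q_h+1}$, setting $s:=\gamma_{q_h}-\gamma_{q_h+1}+1$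 one has $s\le p_{h+1}$ and $\gamma_{q_h+t}=\gamma_{q_h}-s+t$ for $t\in[s]$. The rank $R$-tuple $\Psi_R(\pi)=\psi$ is defined by $\psi_i:=\mathrm{rank}^{q_h-i+1}(B_h)$ for $i\in(q_{h-1},q_h]$, $B$ the $R$-chain of $\pi$. A partition is $\lambda=(\lambda_1\ge\cdots\ge\lambda_n\ge0)\in\mathbb{Z}^n$; boxes $(j,i)$ (column $j$, row $i$), $1\le j\le\lambda_1$, $1\le i\le\zeta_j:=\#\{i:\lambda_i\ge j\}$. $R_\lambda:=\{\zeta_j:\zeta_j<n\}$; below $R=R_\lambda$ with the notation $q_h,r,p_h$. A tableau of shape $\lambda$ is a filling with values in $[n]$ strictly increasing down columns and weakly increasing along rows; $\mathcal{T}_\lambda$ is their set, ordered entrywise. $T_j(i)$ is the entry at column $j$, row $i$; $B(T_j)$ is the set of entries of column $j$; a latent column $0$ with $T_0(i)=i$ is used when needed. A $\lambda$-key is $Y\in\mathcal{T}_\lambda$ with $B(Y_l)\supseteq B(Y_j)$ for $l\le j$. The $\lambda$-key $Y_\lambda(\pi)$ of an $R_\lambda$-permutation $\pi$ is the tableau whose column $j$ consists of the elements of $\{\pi_1,\dots,\pi_{\zeta_j}\}$ in increasing order. A $\lambda$-key $Y$ is gapless if for every $h\in[r-1]$ the following holds: let $b$ be the smallest value in the columns of length $q_{h+1}$ that does not appear in the columns of length $q_h$, and $m$ the largest value in the columns of length $q_h$; if $b\le m$ then every column of length $q_{h+1}$ contains all of $b,b+1,\dots,m$ (in consecutive rows).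 The $\lambda$-row end list of $T$ is $\omega_i:=T_{\lambda_i}(i)$; for an upper $R_\lambda$-increasing tuple $\alpha$, $M_\lambda(\alpha)$ is the maximum element (under entrywise order) of the nonempty, join-closed set of $T\in\mathcal{T}_\lambda$ with $\lambda$-row end list $\alpha$. *)

theory Defs
  imports Main
begin

(* Conventions: n-tuples and permutations are functions nat => nat, meaningful on {1..n},
   and 0 outside {1..n}.  A partition is lam :: nat => nat, meaningful on {1..n}.
   Tableaux are functions T :: nat => nat => nat, T j i = entry in column j, row i,
   and 0 outside the shape.  R-chains are functions nat => nat set indexed by 0..r+1,
   empty for larger indices. *)

definition q :: "nat set \<Rightarrow> nat \<Rightarrow> nat \<Rightarrow> nat" where
  "q R n h = (0 # sorted_list_of_set R @ [n]) ! h"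

definition R_tuple :: "nat \<Rightarrow> (nat \<Rightarrow> nat) \<Rightarrow> bool" where
  "R_tuple n \<nu> \<longleftrightarrow> (\<forall>i\<in>{1..n}. \<nu> i \<in> {1..n}) \<and> (\<forall>i. i \<notin> {1..n} \<longrightarrow> \<nu> i = 0)"

definition upper :: "nat \<Rightarrow> (nat \<Rightarrow> nat) \<Rightarrow> bool" where
  "upper n \<nu> \<longleftrightarrow> (\<forall>i\<in>{1..n}. i \<le> \<nu> i)"

definition R_increasing :: "nat set \<Rightarrow> nat \<Rightarrow> (nat \<Rightarrow> nat) \<Rightarrow> bool" where
  "R_increasing R n \<nu> \<longleftrightarrow>
     (\<forall>h\<in>{1..card R + 1}. \<forall>i j. q R n (h - 1) < i \<and> i < j \<and> j \<le> q R n h \<longrightarrow> \<nu> i < \<nu> j)"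

definition R_perm :: "nat set \<Rightarrow> nat \<Rightarrow> (nat \<Rightarrow> nat) \<Rightarrow> bool" where
  "R_perm R n \<pi> \<longleftrightarrow> R_tuple n \<pi> \<and> bij_betw \<pi> {1..n} {1..n} \<and> R_increasing R n \<pi>"

definition R312_containing :: "nat set \<Rightarrow> nat \<Rightarrow> (nat \<Rightarrow> nat) \<Rightarrow> bool" where
  "R312_containing R n \<pi> \<longleftrightarrow>
     (\<exists>h\<in>{1..card R - 1}. \<exists>a b c. 1 \<le> a \<and> a \<le> q R n h \<and> q R n h < b \<and> b \<le> q R n (h + 1)
        \<and> q R n (h + 1) < c \<and> c \<le> n \<and> \<pi> b < \<pi> c \<and> \<pi> c < \<pi> a)"

definition R_chain :: "nat set \<Rightarrow> nat \<Rightarrow> (nat \<Rightarrow> nat set) \<Rightarrow> bool" where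
  "R_chain R n B \<longleftrightarrow> B 0 = {} \<and> B (card R + 1) = {1..n}
     \<and> (\<forall>h\<le>card R. B h \<subset> B (Suc h))
     \<and> (\<forall>h\<le>card R + 1. card (B h) = q R n h)
     \<and> (\<forall>h. card R + 1 < h \<longrightarrow> B h = {})"

definition chain_of :: "nat set \<Rightarrow> nat \<Rightarrow> (nat \<Rightarrow> nat) \<Rightarrow> nat \<Rightarrow> nat set" where
  "chain_of R n \<pi> h = (if h \<le> card R + 1 then \<pi> ` {1..q R n h} else {})"

definition is_clump :: "nat set \<Rightarrow> nat set \<Rightarrow> bool" where
  "is_clump S L \<longleftrightarrow> (\<exists>a b. a \<le> b \<and> L = {a..b} \<and> L \<subseteq> S \<and> (0 < a \<longrightarrow> a - 1 \<notin> S) \<and> Suc b \<notin> S)"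

(* L_e \<union> ... \<union> L_f is the union of the clumps whose minimum is \<ge> min L_e *)
definition rightmost_clump_deleting :: "nat set \<Rightarrow> nat \<Rightarrow> (nat \<Rightarrow> nat set) \<Rightarrow> bool" where
  "rightmost_clump_deleting R n B \<longleftrightarrow>
     (\<forall>h\<in>{1..card R}. \<exists>L. is_clump (B (Suc h)) L
        \<and> \<Union>{L'. is_clump (B (Suc h)) L' \<and> Min L < Min L'} \<subseteq> B (Suc h) - B h
        \<and> B (Suc h) - B h \<subseteq> \<Union>{L'. is_clump (B (Suc h)) L' \<and> Min L \<le> Min L'})"

definition gapless_tuple :: "nat set \<Rightarrow> nat \<Rightarrow> (nat \<Rightarrow> nat) \<Rightarrow> bool" where
  "gapless_tuple R n \<gamma> \<longleftrightarrow> R_tuple n \<gamma> \<and> upper n \<gamma> \<and> R_increasing R n \<gamma> \<and>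
     (\<forall>h\<in>{1..card R}. \<gamma> (q R n h) > \<gamma> (q R n h + 1) \<longrightarrow>
        (let s = \<gamma> (q R n h) - \<gamma> (q R n h + 1) + 1 in
           s \<le> q R n (h + 1) - q R n h \<and>
           (\<forall>t\<in>{1..s}. \<gamma> (q R n h + t) = \<gamma> (q R n h) - s + t)))"

definition rank :: "nat \<Rightarrow> nat set \<Rightarrow> nat" where
  "rank d Q = sorted_list_of_set Q ! (card Q - d)"

definition Psi :: "nat set \<Rightarrow> nat \<Rightarrow> (nat \<Rightarrow> nat) \<Rightarrow> nat \<Rightarrow> nat" where
  "Psi R n \<pi> i = (if i \<in> {1..n} then
      (let h = (THE h. h \<in> {1..card R + 1} \<and> q R n (h - 1) < i \<and> i \<le> q R n h)
       in rank (q R n h - i + 1) (chain_of R n \<pi> h))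
     else 0)"

definition is_partition :: "nat \<Rightarrow> (nat \<Rightarrow> nat) \<Rightarrow> bool" where
  "is_partition n lam \<longleftrightarrow> (\<forall>i j. 1 \<le> i \<longrightarrow> i \<le> j \<longrightarrow> j \<le> n \<longrightarrow> lam j \<le> lam i)"

definition zeta :: "nat \<Rightarrow> (nat \<Rightarrow> nat) \<Rightarrow> nat \<Rightarrow> nat" where
  "zeta n lam j = card {i\<in>{1..n}. j \<le> lam i}"

definition R_of :: "nat \<Rightarrow> (nat \<Rightarrow> nat) \<Rightarrow> nat set" where
  "R_of n lam = {zeta n lam j | j. 1 \<le> j \<and> j \<le> lam 1 \<and> zeta n lam j < n}"

definition in_shape :: "nat \<Rightarrow> (nat \<Rightarrow> nat) \<Rightarrow> nat \<Rightarrow> nat \<Rightarrow> bool" where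
  "in_shape n lam j i \<longleftrightarrow> 1 \<le> i \<and> i \<le> n \<and> 1 \<le> j \<and> j \<le> lam i"

definition tableau :: "nat \<Rightarrow> (nat \<Rightarrow> nat) \<Rightarrow> (nat \<Rightarrow> nat \<Rightarrow> nat) \<Rightarrow> bool" where
  "tableau n lam T \<longleftrightarrow>
     (\<forall>j i. in_shape n lam j i \<longrightarrow> T j i \<in> {1..n})
     \<and> (\<forall>j i. \<not> in_shape n lam j i \<longrightarrow> T j i = 0)
     \<and> (\<forall>j i. in_shape n lam j i \<and> in_shape n lam j (Suc i) \<longrightarrow> T j i < T j (Suc i))
     \<and> (\<forall>j i. in_shape n lam j i \<and> in_shape n lam (Suc j) i \<longrightarrow> T j i \<le> T (Suc j) i)"

definition colset :: "nat \<Rightarrow> (nat \<Rightarrow> nat) \<Rightarrow> (nat \<Rightarrow> nat \<Rightarrow> nat) \<Rightarrow> nat \<Rightarrow> nat set" where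
  "colset n lam T j = {T j i | i. 1 \<le> i \<and> i \<le> zeta n lam j}"

definition is_key :: "nat \<Rightarrow> (nat \<Rightarrow> nat) \<Rightarrow> (nat \<Rightarrow> nat \<Rightarrow> nat) \<Rightarrow> bool" where
  "is_key n lam Y \<longleftrightarrow> tableau n lam Y \<and>
     (\<forall>l j. 1 \<le> l \<longrightarrow> l \<le> j \<longrightarrow> j \<le> lam 1 \<longrightarrow> colset n lam Y j \<subseteq> colset n lam Y l)"

definition key_of_perm :: "nat \<Rightarrow> (nat \<Rightarrow> nat) \<Rightarrow> (nat \<Rightarrow> nat) \<Rightarrow> nat \<Rightarrow> nat \<Rightarrow> nat" where
  "key_of_perm n lam \<pi> j i =
     (if in_shape n lam j i then sorted_list_of_set (\<pi> ` {1..zeta n lam j}) ! (i - 1) else 0)"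

definition cols_of_length :: "nat \<Rightarrow> (nat \<Rightarrow> nat) \<Rightarrow> (nat \<Rightarrow> nat \<Rightarrow> nat) \<Rightarrow> nat \<Rightarrow> nat set" where
  "cols_of_length n lam Y L = \<Union>{colset n lam Y j | j. 1 \<le> j \<and> j \<le> lam 1 \<and> zeta n lam j = L}"

definition gapless_key :: "nat \<Rightarrow> (nat \<Rightarrow> nat) \<Rightarrow> (nat \<Rightarrow> nat \<Rightarrow> nat) \<Rightarrow> bool" where
  "gapless_key n lam Y \<longleftrightarrow> is_key n lam Y \<and>
     (\<forall>h\<in>{1..card (R_of n lam) - 1}.
        let Ch = cols_of_length n lam Y (q (R_of n lam) n h);
            Ch1 = cols_of_length n lam Y (q (R_of n lam) n (h + 1));
            b = Min (Ch1 - Ch); m = Max Ch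
        in b \<le> m \<longrightarrow>
           (\<forall>j. 1 \<le> j \<and> j \<le> lam 1 \<and> zeta n lam j = q (R_of n lam) n (h + 1)
                \<longrightarrow> {b..m} \<subseteq> colset n lam Y j))"

(* lambda-row end list, with the latent column 0: T_0(i) = i *)
definition row_end :: "nat \<Rightarrow> (nat \<Rightarrow> nat) \<Rightarrow> (nat \<Rightarrow> nat \<Rightarrow> nat) \<Rightarrow> nat \<Rightarrow> nat" where
  "row_end n lam T i = (if i \<in> {1..n} then (if lam i = 0 then i else T (lam i) i) else 0)"

definition M_max :: "nat \<Rightarrow> (nat \<Rightarrow> nat) \<Rightarrow> (nat \<Rightarrow> nat) \<Rightarrow> (nat \<Rightarrow> nat \<Rightarrow> nat)" where
  "M_max n lam \<alpha> = (GREATEST T. tableau n lam T \<and> row_end n lam T = \<alpha>)"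

definition key_of_chain :: "nat \<Rightarrow> (nat \<Rightarrow> nat) \<Rightarrow> (nat \<Rightarrow> nat set) \<Rightarrow> nat \<Rightarrow> nat \<Rightarrow> nat" where
  "key_of_chain n lam B j i =
     (if in_shape n lam j i then
        sorted_list_of_set (B (THE h. h \<le> card (R_of n lam) + 1 \<and> q (R_of n lam) n h = zeta n lam j)) ! (i - 1)
      else 0)"

end

theory Submission imports Defs begin

lemma sl_strict: "finite S \<Longrightarrow> sorted_wrt (<) (sorted_list_of_set (S::nat set))"
  by simp

lemma sl_len: "finite S \<Longrightarrow> length (sorted_list_of_set (S::nat set)) = card S"
  by simp

lemma sl_mem: "finite S \<Longrightarrow> k < card S \<Longrightarrow> sorted_list_of_set (S::nat set) ! k \<in> S"
  by (metis nth_mem set_sorted_list_of_set sl_len)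

lemma sl_less: "finite S \<Longrightarrow> k < k' \<Longrightarrow> k' < card S \<Longrightarrow> sorted_list_of_set (S::nat set) ! k < sorted_list_of_set S ! k'"
  using sorted_wrt_nth_less[OF sl_strict] by (simp)

lemma sl_below:
  assumes "finite S" "k < card (S::nat set)"
  shows "{y\<in>S. y < sorted_list_of_set S ! k} = (\<lambda>i. sorted_list_of_set S ! i) ` {..<k}"
proof -
  let ?xs = "sorted_list_of_set S"
  have len: "length ?xs = card S" using assms by simp
  show ?thesis
  proof (rule set_eqI, rule iffI)
    fix y assume "y \<in> {y\<in>S. y < ?xs ! k}"
    then have yS: "y \<in> S" and yl: "y < ?xs ! k" by auto
    then obtain i where i: "i < length ?xs" "?xs ! i = y"
      by (metis assms(1) in_set_conv_nth set_sorted_list_of_set)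
    have "i < k"
    proof (rule ccontr)
      assume "\<not> i < k"
      then have "k \<le> i" by simp
      then have "?xs ! k \<le> ?xs ! i"
        using sl_less[OF assms(1), of k i] i len by (cases "k = i") auto
      then show False using i yl by simp
    qed
    then show "y \<in> (\<lambda>i. ?xs ! i) ` {..<k}" using i by auto
  next
    fix y assume "y \<in> (\<lambda>i. ?xs ! i) ` {..<k}"
    then obtain i where "i < k" "y = ?xs ! i" by auto
    then show "y \<in> {y\<in>S. y < ?xs ! k}"
      using sl_less[OF assms(1), of i k] sl_mem[OF assms(1), of i] assms by auto
  qed
qed

lemma sl_card_below:
  assumes "finite S" "k < card (S::nat set)"
  shows "card {y\<in>S. y < sorted_list_of_set S ! k} = k"
proof -
  have "inj_on (\<lambda>i. sorted_list_of_set S ! i) {..<k}"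
    using assms by (intro inj_onI) (metis distinct_sorted_list_of_set nth_eq_iff_index_eq
          order.strict_trans lessThan_iff sl_len)
  then show ?thesis using sl_below[OF assms] by (simp add: card_image)
qed

lemma sl_char:
  assumes "finite S" "x \<in> (S::nat set)" "card {y\<in>S. y < x} = k"
  shows "sorted_list_of_set S ! k = x" "k < card S"
proof -
  obtain i where i: "i < card S" "sorted_list_of_set S ! i = x"
    by (metis assms(1,2) in_set_conv_nth set_sorted_list_of_set sl_len)
  then have "card {y\<in>S. y < x} = i" using sl_card_below[OF assms(1) i(1)] by simp
  then show "sorted_list_of_set S ! k = x" "k < card S" using i assms by auto
qed

lemma sl_subset:
  assumes "finite B" "A \<subseteq> (B::nat set)" "k < card A"
  shows "sorted_list_of_set B ! k \<le> sorted_list_of_set A ! k"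
proof (rule ccontr)
  have fA: "finite A" using assms finite_subset by blast
  have kB: "k < card B" using assms card_mono by (metis order.strict_trans2)
  let ?x = "sorted_list_of_set A ! k"
  assume "\<not> ?thesis"
  then have "{y\<in>A. y \<le> ?x} \<subseteq> {y\<in>B. y < sorted_list_of_set B ! k}" using assms by auto
  then have "card {y\<in>A. y \<le> ?x} \<le> k"
    using card_mono[of "{y\<in>B. y < sorted_list_of_set B ! k}"] sl_card_below[OF assms(1) kB] assms(1)
    by (metis (no_types, lifting) finite_subset mem_Collect_eq subsetI)
  moreover have "{y\<in>A. y \<le> ?x} = insert ?x {y\<in>A. y < ?x}" using sl_mem[OF fA assms(3)] by auto
  then have "card {y\<in>A. y \<le> ?x} = Suc k" using sl_card_below[OF fA assms(3)] fA by simp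
  ultimately show False by simp
qed

lemma sl_ge_index:
  assumes "finite S" "S \<subseteq> {1..(N::nat)}" "k < card S"
  shows "Suc k \<le> sorted_list_of_set S ! k"
proof -
  let ?x = "sorted_list_of_set S ! k"
  have "{y\<in>S. y < ?x} \<subseteq> {1..<?x}" using assms by auto
  then have "card {y\<in>S. y < ?x} \<le> card {1..<?x}" by (intro card_mono) auto
  then have "k \<le> ?x - 1" using sl_card_below[OF assms(1,3)] by simp
  moreover have "?x \<ge> 1" using sl_mem[OF assms(1,3)] assms(2) by auto
  ultimately show ?thesis by simp
qed

lemma sl_image_mono:
  assumes "\<And>i i'. 1 \<le> i \<Longrightarrow> i < i' \<Longrightarrow> i' \<le> m \<Longrightarrow> f i < (f i' :: nat)"
  shows "sorted_list_of_set (f ` {1..m}) = map f [1..<Suc m]"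
proof -
  have "sorted_wrt (<) (map f [1..<Suc m])"
    unfolding sorted_wrt_map by (rule sorted_wrt_mono_rel[OF _ sorted_wrt_upt]) (auto intro: assms)
  then show ?thesis
    by (metis List.finite_set set_map set_upt atLeastLessThanSuc_atLeastAtMost sorted_list_of_set.idem_if_sorted_distinct
          strict_sorted_iff)
qed

lemma sl_interval:
  assumes "1 \<le> i" "i \<le> n" shows "sorted_list_of_set {1..(n::nat)} ! (i - 1) = i"
proof -
  have "sorted_list_of_set {1..n} = [1..<Suc n]"
    by (metis atLeastLessThanSuc_atLeastAtMost sorted_list_of_set_range)
  then show ?thesis using assms by (simp del: upt_Suc add: nth_upt)
qed

lemma prefix_set:
  assumes "S \<subseteq> {1..(n::nat)}" "\<And>i i'. i \<in> S \<Longrightarrow> 1 \<le> i' \<Longrightarrow> i' \<le> i \<Longrightarrow> i' \<in> S"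
  shows "S = {1..card S}"
proof (cases "S = {}")
  case True then show ?thesis by simp
next
  case False
  have fin: "finite S" using assms(1) finite_subset by blast
  have "S = {1..Max S}"
  proof
    show "S \<subseteq> {1..Max S}" using assms(1) fin by auto
    show "{1..Max S} \<subseteq> S" using assms(2) Max_in[OF fin False] by auto
  qed
  then show ?thesis by (metis card_atLeastAtMost diff_Suc_1)
qed

locale tabx =
  fixes n :: nat and lam :: "nat \<Rightarrow> nat"
  assumes n1: "1 \<le> n" and part: "is_partition n lam"
begin

abbreviation "RR \<equiv> R_of n lam"
abbreviation "r \<equiv> card RR"
abbreviation "qq \<equiv> q RR n"
abbreviation "zz \<equiv> zeta n lam"

lemma lam_mono: "1 \<le> i \<Longrightarrow> i \<le> j \<Longrightarrow> j \<le> n \<Longrightarrow> lam j \<le> lam i"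
  using part unfolding is_partition_def by blast

lemma zeta_prefix: "{i\<in>{1..n}. j \<le> lam i} = {1..zz j}"
  unfolding zeta_def
  by (rule prefix_set[of _ n]) (auto intro: order.trans[OF _ lam_mono])

lemma zeta_le_n: "zz j \<le> n"
  unfolding zeta_def by (metis (no_types, lifting) card_mono finite_atLeastAtMost mem_Collect_eq subsetI card_atLeastAtMost diff_Suc_1)

lemma zeta_iff: "1 \<le> i \<Longrightarrow> i \<le> n \<Longrightarrow> (j \<le> lam i \<longleftrightarrow> i \<le> zz j)"
  using zeta_prefix[of j] by (metis (no_types, lifting) atLeastAtMost_iff mem_Collect_eq)

lemma in_shape_iff: "in_shape n lam j i \<longleftrightarrow> 1 \<le> j \<and> 1 \<le> i \<and> i \<le> zz j"
  unfolding in_shape_def using zeta_iff zeta_le_n order.trans by blast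

lemma zeta_anti: "j \<le> j' \<Longrightarrow> zz j' \<le> zz j"
  unfolding zeta_def by (intro card_mono) auto

lemma zeta_pos_iff: "1 \<le> zz j \<longleftrightarrow> j \<le> lam 1"
  using zeta_iff[of 1 j] n1 by simp

lemma R_sub: "RR \<subseteq> {1..<n}"
  unfolding R_of_def using zeta_pos_iff by auto

lemma R_fin: "finite RR" using R_sub finite_subset by blast

abbreviation "xs \<equiv> sorted_list_of_set RR"

lemma qlist_sorted: "sorted_wrt (<) (0 # xs @ [n])"
proof -
  have "sorted_wrt (<) xs" using R_fin by simp
  moreover have "\<forall>x\<in>set xs. 0 < x \<and> x < n" using R_fin R_sub by auto
  ultimately show ?thesis using n1 by (auto simp: sorted_wrt_append)
qed

lemma qlist_len: "length (0 # xs @ [n]) = r + 2" using R_fin by simp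

lemma q_less: "h < h' \<Longrightarrow> h' \<le> r + 1 \<Longrightarrow> qq h < qq h'"
  unfolding q_def using sorted_wrt_nth_less[OF qlist_sorted, of h h'] qlist_len by simp

lemma q_le: "h \<le> h' \<Longrightarrow> h' \<le> r + 1 \<Longrightarrow> qq h \<le> qq h'"
  using q_less by (cases "h = h'") (auto intro: less_imp_le)

lemma q_less_iff: "h \<le> r + 1 \<Longrightarrow> h' \<le> r + 1 \<Longrightarrow> qq h < qq h' \<longleftrightarrow> h < h'"
  using q_less by (metis linorder_neqE_nat order.asym)

lemma q_inj: "h \<le> r + 1 \<Longrightarrow> h' \<le> r + 1 \<Longrightarrow> qq h = qq h' \<longleftrightarrow> h = h'"
  using q_less by (metis linorder_neqE_nat order.irrefl)

lemma q0: "qq 0 = 0" unfolding q_def by simp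

lemma q_last: "qq (r + 1) = n"
  unfolding q_def using R_fin by (simp add: nth_append)

lemma q_mid: "1 \<le> h \<Longrightarrow> h \<le> r \<Longrightarrow> qq h = xs ! (h - 1)"
  unfolding q_def using R_fin by (cases h) (auto simp: nth_append)

lemma q_in_R: "1 \<le> h \<Longrightarrow> h \<le> r \<Longrightarrow> qq h \<in> RR"
  using q_mid R_fin by (metis One_nat_def Suc_le_eq Suc_pred diff_less_Suc less_le_trans nth_mem set_sorted_list_of_set sorted_list_of_set.length_sorted_key_list_of_set zero_less_one)

lemma R_in_q: "x \<in> RR \<Longrightarrow> \<exists>h. 1 \<le> h \<and> h \<le> r \<and> qq h = x"
proof -
  assume "x \<in> RR"
  then obtain k where k: "k < length xs" "xs ! k = x" using R_fin by (metis in_set_conv_nth set_sorted_list_of_set)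
  then show ?thesis using q_mid[of "Suc k"] R_fin by (intro exI[of _ "Suc k"]) auto
qed

lemma q_le_n: "h \<le> r + 1 \<Longrightarrow> qq h \<le> n"
  using q_le[of h "r+1"] q_last by simp

lemma q_pos: "1 \<le> h \<Longrightarrow> h \<le> r + 1 \<Longrightarrow> 1 \<le> qq h"
  using q_less[of 0 h] q0 by simp

definition hc :: "nat \<Rightarrow> nat" where
  "hc j = (THE h. h \<le> r + 1 \<and> qq h = zz j)"

lemma hc_ex: "1 \<le> j \<Longrightarrow> j \<le> lam 1 \<Longrightarrow> \<exists>h. 1 \<le> h \<and> h \<le> r + 1 \<and> qq h = zz j"
proof -
  assume j: "1 \<le> j" "j \<le> lam 1"
  show ?thesis
  proof (cases "zz j < n")
    case True
    then have "zz j \<in> RR" unfolding R_of_def using j by auto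
    then show ?thesis using R_in_q by fastforce
  next
    case False
    then show ?thesis using zeta_le_n[of j] q_last by (intro exI[of _ "r+1"]) auto
  qed
qed

lemma hc: assumes "1 \<le> j" "j \<le> lam 1"
  shows "1 \<le> hc j" "hc j \<le> r + 1" "qq (hc j) = zz j"
proof -
  obtain h where h: "1 \<le> h" "h \<le> r + 1" "qq h = zz j" using hc_ex assms by blast
  have "hc j = h" unfolding hc_def
    by (rule the_equality) (use h q_inj in metis)+
  then show "1 \<le> hc j" "hc j \<le> r + 1" "qq (hc j) = zz j" using h by auto
qed

lemma hc_eqI: assumes "1 \<le> j" "j \<le> lam 1" "h \<le> r + 1" "qq h = zz j" shows "hc j = h"
proof -
  have "qq (hc j) = qq h" using hc(3)[OF assms(1,2)] assms(4) by simp
  then show ?thesis using q_inj[of "hc j" h] hc(2)[OF assms(1,2)] assms(3) by blast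
qed

lemma hc_anti: assumes "1 \<le> j" "j \<le> j'" "j' \<le> lam 1" shows "hc j' \<le> hc j"
proof (rule ccontr)
  assume "\<not> ?thesis"
  then have "qq (hc j) < qq (hc j')" using q_less hc(2)[of j'] assms by simp
  moreover have "zz j' \<le> zz j" using zeta_anti assms by simp
  ultimately show False using hc(3)[of j] hc(3)[of j'] assms by simp
qed

lemma col_ex: "1 \<le> h \<Longrightarrow> h \<le> r \<Longrightarrow> \<exists>j. 1 \<le> j \<and> j \<le> lam 1 \<and> hc j = h"
proof -
  assume h: "1 \<le> h" "h \<le> r"
  then have "qq h \<in> RR" by (rule q_in_R)
  then obtain j where "1 \<le> j" "j \<le> lam 1" "zz j = qq h" unfolding R_of_def by auto
  then show ?thesis using hc_eqI[of j h] h by auto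
qed

definition hr :: "nat \<Rightarrow> nat" where
  "hr i = (THE h. 1 \<le> h \<and> h \<le> r + 1 \<and> qq (h - 1) < i \<and> i \<le> qq h)"

lemma carrel_unique:
  assumes "1 \<le> h" "h \<le> r + 1" "qq (h - 1) < i" "i \<le> qq h"
    and "1 \<le> h'" "h' \<le> r + 1" "qq (h' - 1) < i" "i \<le> qq h'"
  shows "h = h'"
proof (rule ccontr)
  assume "h \<noteq> h'"
  then consider "h < h'" | "h' < h" by linarith
  then show False
  proof cases
    case 1 then have "qq h \<le> qq (h' - 1)" using q_le assms by simp
    then show False using assms by simp
  next
    case 2 then have "qq h' \<le> qq (h - 1)" using q_le assms by simp
    then show False using assms by simp
  qed
qed

lemma hr_eqI: "1 \<le> h \<Longrightarrow> h \<le> r + 1 \<Longrightarrow> qq (h - 1) < i \<Longrightarrow> i \<le> qq h \<Longrightarrow> hr i = h"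
  unfolding hr_def by (rule the_equality) (use carrel_unique in blast)+

lemma hr_ex: assumes "1 \<le> i" "i \<le> n" shows "\<exists>h. 1 \<le> h \<and> h \<le> r + 1 \<and> qq (h - 1) < i \<and> i \<le> qq h"
proof -
  define h where "h = (LEAST h. i \<le> qq h)"
  have ex: "i \<le> qq (r+1)" using q_last assms by simp
  have h1: "i \<le> qq h" unfolding h_def by (rule LeastI[of _ "r+1"], rule ex)
  have h2: "h \<le> r + 1" unfolding h_def by (rule Least_le, rule ex)
  have h3: "h \<ge> 1" using h1 q0 assms by (cases h) auto
  have "\<not> i \<le> qq (h - 1)" unfolding h_def using h3 h_def
    by (metis Least_le diff_less not_le zero_less_one less_le_trans)
  then show ?thesis using h1 h2 h3 by auto
qed

lemma hr: assumes "1 \<le> i" "i \<le> n"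
  shows "1 \<le> hr i" "hr i \<le> r + 1" "qq (hr i - 1) < i" "i \<le> qq (hr i)"
  using hr_ex[OF assms] hr_eqI by metis+

lemma hr_row:
  assumes "1 \<le> i" "i \<le> n" "1 \<le> lam i"
  shows "hr i = hc (lam i)" "1 \<le> lam i" "lam i \<le> lam 1"
proof -
  show lj: "lam i \<le> lam 1" using lam_mono assms by simp
  show "1 \<le> lam i" by fact
  let ?h = "hc (lam i)"
  note H = hc[OF assms(3) lj]
  have a: "i \<le> qq ?h" using H zeta_iff[OF assms(1,2), of "lam i"] by simp
  have b: "qq (?h - 1) < i"
  proof (cases "?h - 1 = 0")
    case True then show ?thesis using q0 assms by simp
  next
    case False
    then have "1 \<le> ?h - 1" "?h - 1 \<le> r" using H by auto
    then obtain j' where j': "1 \<le> j'" "j' \<le> lam 1" "hc j' = ?h - 1" using col_ex[of "?h - 1"] by blast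
    have "qq (?h - 1) < qq ?h" using q_less[of "?h - 1" ?h] H(1,2) by simp
    then have "zz j' < zz (lam i)" using hc[OF j'(1,2)] j' H by simp
    then have "lam i < j'" using zeta_anti by (meson not_le)
    then show ?thesis using zeta_iff[OF assms(1,2), of j'] hc[OF j'(1,2)] j' by simp
  qed
  show "hr i = ?h" using hr_eqI[OF H(1) H(2) b a] .
qed

lemma hr_zero:
  assumes "1 \<le> i" "i \<le> n" "lam i = 0"
  shows "hr i = r + 1"
proof -
  have "qq r < i"
  proof (cases "r = 0")
    case True then show ?thesis using q0 assms by simp
  next
    case False
    then obtain j' where j': "1 \<le> j'" "j' \<le> lam 1" "hc j' = r" using col_ex[of r] by auto
    then show ?thesis using zeta_iff[OF assms(1,2), of j'] hc[OF j'(1,2)] assms by simp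
  qed
  then show ?thesis using hr_eqI[of "r+1" i] q_last assms by simp
qed

end

context tabx begin

lemma chain_mono:
  assumes "R_chain RR n B" "h \<le> h'" "h' \<le> r + 1"
  shows "B h \<subseteq> B h'"
  using assms(2,3)
proof (induction h' rule: dec_induct)
  case base then show ?case by simp
next
  case (step m)
  then have "B m \<subset> B (Suc m)" using assms(1) unfolding R_chain_def by simp
  then show ?case using step by auto
qed

lemma chain_basic:
  assumes "R_chain RR n B"
  shows "B 0 = {}" "B (r + 1) = {1..n}" "\<And>h. h \<le> r + 1 \<Longrightarrow> card (B h) = qq h"
    "\<And>h. r + 1 < h \<Longrightarrow> B h = {}"
  using assms unfolding R_chain_def by auto

lemma chain_sub: "R_chain RR n B \<Longrightarrow> h \<le> r + 1 \<Longrightarrow> B h \<subseteq> {1..n}"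
  using chain_mono[of B h "r+1"] chain_basic(2)[of B] by simp

lemma chain_fin: "R_chain RR n B \<Longrightarrow> h \<le> r + 1 \<Longrightarrow> finite (B h)"
  using chain_sub finite_subset by blast

lemma kc_eq: "key_of_chain n lam B j i = (if in_shape n lam j i then sorted_list_of_set (B (hc j)) ! (i - 1) else 0)"
  unfolding key_of_chain_def hc_def by simp

lemma colset_kc:
  assumes "R_chain RR n B" "1 \<le> j" "j \<le> lam 1"
  shows "colset n lam (key_of_chain n lam B) j = B (hc j)"
proof -
  note H = hc[OF assms(2,3)]
  have fin: "finite (B (hc j))" using chain_fin assms H by simp
  have card: "card (B (hc j)) = zz j" using chain_basic(3)[OF assms(1) H(2)] H by simp
  show ?thesis
  proof (rule set_eqI)
    fix x
    have "x \<in> colset n lam (key_of_chain n lam B) j \<longleftrightarrow> (\<exists>i. 1 \<le> i \<and> i \<le> zz j \<and> x = sorted_list_of_set (B (hc j)) ! (i - 1))"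
      unfolding colset_def kc_eq in_shape_iff using assms(2) by auto
    also have "\<dots> \<longleftrightarrow> (\<exists>k. k < zz j \<and> x = sorted_list_of_set (B (hc j)) ! k)"
    proof
      assume "\<exists>i. 1 \<le> i \<and> i \<le> zz j \<and> x = sorted_list_of_set (B (hc j)) ! (i - 1)"
      then obtain i where "1 \<le> i \<and> i \<le> zz j \<and> x = sorted_list_of_set (B (hc j)) ! (i - 1)" by blast
      then show "\<exists>k. k < zz j \<and> x = sorted_list_of_set (B (hc j)) ! k" by (intro exI[of _ "i - 1"]) auto
    next
      assume "\<exists>k. k < zz j \<and> x = sorted_list_of_set (B (hc j)) ! k"
      then obtain k where "k < zz j \<and> x = sorted_list_of_set (B (hc j)) ! k" by blast
      then show "\<exists>i. 1 \<le> i \<and> i \<le> zz j \<and> x = sorted_list_of_set (B (hc j)) ! (i - 1)" by (intro exI[of _ "Suc k"]) auto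
    qed
    also have "\<dots> \<longleftrightarrow> x \<in> B (hc j)"
      using fin card by (metis in_set_conv_nth set_sorted_list_of_set sl_len)
    finally show "x \<in> colset n lam (key_of_chain n lam B) j \<longleftrightarrow> x \<in> B (hc j)" .
  qed
qed

lemma kc_key:
  assumes "R_chain RR n B"
  shows "is_key n lam (key_of_chain n lam B)"
proof -
  let ?Y = "key_of_chain n lam B"
  have col: "1 \<le> j \<Longrightarrow> j \<le> lam 1 \<Longrightarrow> finite (B (hc j)) \<and> card (B (hc j)) = zz j \<and> B (hc j) \<subseteq> {1..n}" for j
    using hc[of j] chain_fin[OF assms] chain_basic(3)[OF assms] chain_sub[OF assms] by simp
  have jl: "in_shape n lam j i \<Longrightarrow> 1 \<le> j \<and> j \<le> lam 1" for j i
    using in_shape_iff zeta_pos_iff by (meson order.trans)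
  have t1: "?Y j i \<in> {1..n}" if "in_shape n lam j i" for j i
  proof -
    have c: "finite (B (hc j))" "card (B (hc j)) = zz j" "B (hc j) \<subseteq> {1..n}" using col jl[OF that] by auto
    have "i - 1 < card (B (hc j))" using c that in_shape_iff by auto
    then have "sorted_list_of_set (B (hc j)) ! (i - 1) \<in> B (hc j)" using sl_mem c by blast
    then show ?thesis unfolding kc_eq using that c by auto
  qed
  have t3: "?Y j i < ?Y j (Suc i)" if "in_shape n lam j i" "in_shape n lam j (Suc i)" for j i
  proof -
    have c: "finite (B (hc j))" "card (B (hc j)) = zz j" using col jl[OF that(1)] by auto
    have "Suc i - 1 < card (B (hc j))" "i - 1 < Suc i - 1" using c that in_shape_iff by auto
    then have "sorted_list_of_set (B (hc j)) ! (i - 1) < sorted_list_of_set (B (hc j)) ! (Suc i - 1)"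
      using sl_less c by blast
    then show ?thesis unfolding kc_eq using that by simp
  qed
  have t4: "?Y j i \<le> ?Y (Suc j) i" if "in_shape n lam j i" "in_shape n lam (Suc j) i" for j i
  proof -
    have j1: "1 \<le> j" "Suc j \<le> lam 1" using jl that by auto
    have sub: "B (hc (Suc j)) \<subseteq> B (hc j)"
      using chain_mono[OF assms] hc_anti[of j "Suc j"] hc(2)[of j] j1 by simp
    have c: "finite (B (hc j))" "card (B (hc (Suc j))) = zz (Suc j)" using col[of j] col[of "Suc j"] j1 by auto
    have "i - 1 < card (B (hc (Suc j)))" using c that(2) in_shape_iff by auto
    then have "sorted_list_of_set (B (hc j)) ! (i - 1) \<le> sorted_list_of_set (B (hc (Suc j))) ! (i - 1)"
      using sl_subset[OF c(1) sub] by blast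
    then show ?thesis unfolding kc_eq using that by simp
  qed
  have tab: "tableau n lam ?Y"
    unfolding tableau_def using t1 t3 t4 by (auto simp: kc_eq)
  have "colset n lam ?Y j \<subseteq> colset n lam ?Y l" if "1 \<le> l" "l \<le> j" "j \<le> lam 1" for l j
    using colset_kc[OF assms] chain_mono[OF assms] hc_anti[OF that] hc(2)[of l] that by simp
  then show ?thesis unfolding is_key_def using tab by blast
qed

lemma kc_inj:
  assumes "R_chain RR n B1" "R_chain RR n B2" "key_of_chain n lam B1 = key_of_chain n lam B2"
  shows "B1 = B2"
proof
  fix h
  show "B1 h = B2 h"
  proof (cases "1 \<le> h \<and> h \<le> r")
    case True
    then obtain j where j: "1 \<le> j" "j \<le> lam 1" "hc j = h" using col_ex by blast
    then show ?thesis using colset_kc[OF assms(1) j(1,2)] colset_kc[OF assms(2) j(1,2)] assms(3) by simp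
  next
    case False
    then consider "h = 0" | "h = r + 1" | "r + 1 < h" by linarith
    then show ?thesis using chain_basic[OF assms(1)] chain_basic[OF assms(2)] by cases auto
  qed
qed

lemma key_col:
  assumes "is_key n lam Y" "1 \<le> j" "j \<le> lam 1"
  shows "sorted_list_of_set (colset n lam Y j) = map (\<lambda>i. Y j i) [1..<Suc (zz j)]"
    "card (colset n lam Y j) = zz j" "colset n lam Y j \<subseteq> {1..n}"
    "\<And>i. 1 \<le> i \<Longrightarrow> i \<le> zz j \<Longrightarrow> Y j i = sorted_list_of_set (colset n lam Y j) ! (i - 1)"
proof -
  have tab: "tableau n lam Y" using assms(1) unfolding is_key_def by simp
  have shape: "1 \<le> i \<Longrightarrow> i \<le> zz j \<Longrightarrow> in_shape n lam j i" for i using in_shape_iff assms by simp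
  have cs: "colset n lam Y j = (\<lambda>i. Y j i) ` {1..zz j}" unfolding colset_def by auto
  have step: "Y j i < Y j (Suc i)" if "1 \<le> i" "Suc i \<le> zz j" for i
    using tab shape[of i] shape[of "Suc i"] that unfolding tableau_def by simp
  have strict0: "Y j i < Y j (i + Suc d)" if "1 \<le> i" "i + Suc d \<le> zz j" for i d
    using that
  proof (induction d)
    case 0 then show ?case using step by simp
  next
    case (Suc d)
    then have "Y j i < Y j (i + Suc d)" by simp
    also have "\<dots> < Y j (Suc (i + Suc d))" using step[of "i + Suc d"] Suc.prems by simp
    finally show ?case by simp
  qed
  have strict: "Y j i < Y j i'" if "1 \<le> i" "i < i'" "i' \<le> zz j" for i i'
    using strict0[of i "i' - i - 1"] that by simp
  show sl: "sorted_list_of_set (colset n lam Y j) = map (\<lambda>i. Y j i) [1..<Suc (zz j)]"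
    unfolding cs by (rule sl_image_mono) (use strict in auto)
  show "card (colset n lam Y j) = zz j"
    using sl by (metis cs finite_atLeastAtMost finite_imageI length_map length_upt diff_Suc_1 sl_len)
  show "colset n lam Y j \<subseteq> {1..n}" using tab shape unfolding cs tableau_def by auto
  show "Y j i = sorted_list_of_set (colset n lam Y j) ! (i - 1)" if "1 \<le> i" "i \<le> zz j" for i
    using that unfolding sl by (simp del: upt_Suc)
qed

lemma key_same_col:
  assumes "is_key n lam Y" "1 \<le> j" "j \<le> lam 1" "1 \<le> j'" "j' \<le> lam 1" "hc j = hc j'"
  shows "colset n lam Y j = colset n lam Y j'"
proof -
  have z: "zz j = zz j'" using hc(3)[of j] hc(3)[of j'] assms by simp
  have fin: "finite (colset n lam Y j)" "finite (colset n lam Y j')"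
    using key_col(3)[OF assms(1)] assms finite_subset by (meson finite_atLeastAtMost)+
  have "colset n lam Y j \<subseteq> colset n lam Y j' \<or> colset n lam Y j' \<subseteq> colset n lam Y j"
    using assms(1) unfolding is_key_def using assms by (cases "j \<le> j'") auto
  then show ?thesis using card_subset_eq fin key_col(2)[OF assms(1)] assms z by metis
qed

lemma key_full_col:
  assumes "is_key n lam Y" "1 \<le> j" "j \<le> lam 1" "hc j = r + 1"
  shows "colset n lam Y j = {1..n}"
proof -
  have "zz j = n" using hc(3)[of j] q_last assms by simp
  then show ?thesis using key_col(2,3)[OF assms(1-3)] by (metis card_atLeastAtMost card_subset_eq diff_Suc_1 finite_atLeastAtMost)
qed

definition colj :: "nat \<Rightarrow> nat" where
  "colj h = (SOME j. 1 \<le> j \<and> j \<le> lam 1 \<and> hc j = h)"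

lemma colj: "1 \<le> h \<Longrightarrow> h \<le> r \<Longrightarrow> 1 \<le> colj h \<and> colj h \<le> lam 1 \<and> hc (colj h) = h"
  unfolding colj_def using col_ex someI_ex by (metis (mono_tags, lifting))

definition chain_of_key :: "(nat \<Rightarrow> nat \<Rightarrow> nat) \<Rightarrow> nat \<Rightarrow> nat set" where
  "chain_of_key Y h = (if h = 0 then {} else if h \<le> r then colset n lam Y (colj h)
      else if h = r + 1 then {1..n} else {})"

lemma chain_of_key_col:
  assumes "is_key n lam Y" "1 \<le> j" "j \<le> lam 1"
  shows "chain_of_key Y (hc j) = colset n lam Y j"
proof (cases "hc j \<le> r")
  case True
  then show ?thesis unfolding chain_of_key_def using hc[OF assms(2,3)] colj[of "hc j"]
      key_same_col[OF assms(1), of "colj (hc j)" j] assms by auto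
next
  case False
  then have "hc j = r + 1" using hc[OF assms(2,3)] by simp
  then show ?thesis unfolding chain_of_key_def using key_full_col[OF assms] by simp
qed

lemma chain_of_key_chain:
  assumes "is_key n lam Y"
  shows "R_chain RR n (chain_of_key Y)"
proof -
  let ?B = "chain_of_key Y"
  have card: "card (?B h) = qq h" if "h \<le> r + 1" for h
  proof -
    have "h = 0 \<or> (1 \<le> h \<and> h \<le> r) \<or> h = r + 1" using that by presburger
    then consider "h = 0" | "1 \<le> h \<and> h \<le> r" | "h = r + 1" by blast
    then show ?thesis
    proof cases
      case 1 then show ?thesis unfolding chain_of_key_def using q0 by simp
    next
      case 2 then show ?thesis unfolding chain_of_key_def
        using colj[of h] key_col(2)[OF assms, of "colj h"] hc(3)[of "colj h"] by auto
    next
      case 3 then show ?thesis unfolding chain_of_key_def using q_last by simp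
    qed
  qed
  have sub: "?B h \<subseteq> ?B (Suc h)" if "h \<le> r" for h
  proof -
    have "h = 0 \<or> (1 \<le> h \<and> Suc h \<le> r) \<or> (1 \<le> h \<and> h = r)" using that by presburger
    then consider "h = 0" | "1 \<le> h \<and> Suc h \<le> r" | "1 \<le> h \<and> h = r" by blast
    then show ?thesis
    proof cases
      case 1 then show ?thesis unfolding chain_of_key_def by simp
    next
      case 2
      note c1 = colj[of h] and c2 = colj[of "Suc h"]
      have "colj (Suc h) \<le> colj h"
      proof (rule ccontr)
        assume "\<not> ?thesis"
        then have "hc (colj (Suc h)) \<le> hc (colj h)" using hc_anti[of "colj h" "colj (Suc h)"] c1 c2 2 by simp
        then show False using c1 c2 2 by simp
      qed
      then have "colset n lam Y (colj h) \<subseteq> colset n lam Y (colj (Suc h))"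
        using assms c1 c2 2 unfolding is_key_def by simp
      then show ?thesis unfolding chain_of_key_def using 2 by simp
    next
      case 3 then show ?thesis unfolding chain_of_key_def
        using colj[of h] key_col(3)[OF assms, of "colj h"] by simp
    qed
  qed
  have "?B h \<subset> ?B (Suc h)" if "h \<le> r" for h
    using sub[OF that] card[of h] card[of "Suc h"] q_less[of h "Suc h"] that by auto
  then show ?thesis unfolding R_chain_def using card q0 q_last
    by (auto simp: chain_of_key_def)
qed

lemma key_eq_kc:
  assumes "is_key n lam Y"
  shows "Y = key_of_chain n lam (chain_of_key Y)"
proof (intro ext)
  fix j i
  have tab: "tableau n lam Y" using assms unfolding is_key_def by simp
  show "Y j i = key_of_chain n lam (chain_of_key Y) j i"
  proof (cases "in_shape n lam j i")
    case True
    then have j: "1 \<le> j" "j \<le> lam 1" "1 \<le> i" "i \<le> zz j" using in_shape_iff zeta_pos_iff by (meson order.trans)+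
    show ?thesis unfolding kc_eq using True chain_of_key_col[OF assms j(1,2)] key_col(4)[OF assms j] by simp
  next
    case False
    then show ?thesis unfolding kc_eq using tab unfolding tableau_def by simp
  qed
qed

end

context tabx begin

lemma perm_basic:
  assumes "R_perm RR n \<pi>"
  shows "bij_betw \<pi> {1..n} {1..n}" "inj_on \<pi> {1..n}" "\<pi> ` {1..n} = {1..n}"
  using assms unfolding R_perm_def bij_betw_def by auto

lemma chain_of_eq: "h \<le> r + 1 \<Longrightarrow> chain_of RR n \<pi> h = \<pi> ` {1..qq h}"
  unfolding chain_of_def by simp

lemma chain_of_chain:
  assumes "R_perm RR n \<pi>"
  shows "R_chain RR n (chain_of RR n \<pi>)"
proof -
  note P = perm_basic[OF assms]
  have card: "card (chain_of RR n \<pi> h) = qq h" if "h \<le> r + 1" for h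
  proof -
    have "inj_on \<pi> {1..qq h}" using P(2) q_le_n[OF that] by (auto intro: inj_on_subset)
    then show ?thesis using chain_of_eq[OF that] by (simp add: card_image)
  qed
  have sub: "chain_of RR n \<pi> h \<subseteq> chain_of RR n \<pi> (Suc h)" if "h \<le> r" for h
    using chain_of_eq[of h] chain_of_eq[of "Suc h"] q_le[of h "Suc h"] that by auto
  have "chain_of RR n \<pi> h \<subset> chain_of RR n \<pi> (Suc h)" if "h \<le> r" for h
    using sub[OF that] card[of h] card[of "Suc h"] q_less[of h "Suc h"] that by auto
  moreover have "chain_of RR n \<pi> (r + 1) = {1..n}" using chain_of_eq[of "r+1"] q_last P(3) by simp
  moreover have "chain_of RR n \<pi> 0 = {}" using chain_of_eq[of 0] q0 by simp
  ultimately show ?thesis unfolding R_chain_def using card by (auto simp: chain_of_def)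
qed

lemma key_of_perm_eq:
  assumes "R_perm RR n \<pi>"
  shows "key_of_perm n lam \<pi> = key_of_chain n lam (chain_of RR n \<pi>)"
proof (intro ext)
  fix j i
  show "key_of_perm n lam \<pi> j i = key_of_chain n lam (chain_of RR n \<pi>) j i"
  proof (cases "in_shape n lam j i")
    case True
    then have j: "1 \<le> j" "j \<le> lam 1" using in_shape_iff zeta_pos_iff by (meson order.trans)+
    then show ?thesis unfolding key_of_perm_def kc_eq using True chain_of_eq[of "hc j"] hc[OF j] by simp
  next
    case False then show ?thesis unfolding key_of_perm_def kc_eq by simp
  qed
qed

definition perm_of_chain :: "(nat \<Rightarrow> nat set) \<Rightarrow> nat \<Rightarrow> nat" where
  "perm_of_chain B i = (if i \<in> {1..n} then
     sorted_list_of_set (B (hr i) - B (hr i - 1)) ! (i - qq (hr i - 1) - 1) else 0)"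

lemma hr_carrel: "1 \<le> h \<Longrightarrow> h \<le> r + 1 \<Longrightarrow> qq (h - 1) < i \<Longrightarrow> i \<le> qq h \<Longrightarrow> hr i = h \<and> 1 \<le> i \<and> i \<le> n"
  using hr_eqI q_le_n by fastforce

lemma poc_carrel:
  assumes B: "R_chain RR n B" and h: "1 \<le> h" "h \<le> r + 1"
  shows "perm_of_chain B ` {Suc (qq (h - 1))..qq h} = B h - B (h - 1)"
    "\<And>i i'. qq (h - 1) < i \<Longrightarrow> i < i' \<Longrightarrow> i' \<le> qq h \<Longrightarrow> perm_of_chain B i < perm_of_chain B i'"
proof -
  let ?D = "B h - B (h - 1)"
  have sub: "B (h - 1) \<subseteq> B h" using chain_mono[OF B, of "h - 1" h] h by simp
  have finD: "finite ?D" using chain_fin[OF B h(2)] by simp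
  have cardD: "card ?D = qq h - qq (h - 1)"
    using card_Diff_subset[OF chain_fin[OF B, of "h - 1"] sub] chain_basic(3)[OF B] h by simp
  have pv: "perm_of_chain B i = sorted_list_of_set ?D ! (i - qq (h - 1) - 1)"
    if "qq (h - 1) < i" "i \<le> qq h" for i
    using hr_carrel[OF h that] unfolding perm_of_chain_def by simp
  show "perm_of_chain B ` {Suc (qq (h - 1))..qq h} = ?D"
  proof (rule set_eqI)
    fix x
    show "x \<in> perm_of_chain B ` {Suc (qq (h - 1))..qq h} \<longleftrightarrow> x \<in> ?D"
    proof
      assume "x \<in> perm_of_chain B ` {Suc (qq (h - 1))..qq h}"
      then obtain i where i0: "i \<in> {Suc (qq (h - 1))..qq h}" "x = perm_of_chain B i" by blast
      then have i: "qq (h - 1) < i" "i \<le> qq h" "x = perm_of_chain B i" by auto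
      then have "i - qq (h - 1) - 1 < card ?D" using cardD by simp
      then show "x \<in> ?D" using i pv sl_mem[OF finD] by simp
    next
      assume "x \<in> ?D"
      then obtain k where k: "k < card ?D" "sorted_list_of_set ?D ! k = x"
        using finD by (metis in_set_conv_nth set_sorted_list_of_set sl_len)
      have "qq (h - 1) < Suc (qq (h - 1) + k)" "Suc (qq (h - 1) + k) \<le> qq h" using k cardD by auto
      moreover have "perm_of_chain B (Suc (qq (h - 1) + k)) = x" using pv[OF calculation] k by simp
      ultimately show "x \<in> perm_of_chain B ` {Suc (qq (h - 1))..qq h}" by force
    qed
  qed
  show "perm_of_chain B i < perm_of_chain B i'" if "qq (h - 1) < i" "i < i'" "i' \<le> qq h" for i i'
  proof -
    have "i' - qq (h - 1) - 1 < card ?D" "i - qq (h - 1) - 1 < i' - qq (h - 1) - 1" using that cardD by auto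
    then show ?thesis using pv[of i] pv[of i'] that sl_less[OF finD] by simp
  qed
qed

lemma poc_prefix:
  assumes B: "R_chain RR n B" and h: "h \<le> r + 1"
  shows "perm_of_chain B ` {1..qq h} = B h"
  using h
proof (induction h)
  case 0 then show ?case using q0 chain_basic(1)[OF B] by simp
next
  case (Suc h)
  have "{1..qq (Suc h)} = {1..qq h} \<union> {Suc (qq h)..qq (Suc h)}"
    using q_le[of h "Suc h"] Suc.prems by auto
  then have "perm_of_chain B ` {1..qq (Suc h)} = B h \<union> (B (Suc h) - B h)"
    using Suc poc_carrel(1)[OF B, of "Suc h"] by (simp add: image_Un)
  also have "\<dots> = B (Suc h)" using chain_mono[OF B, of h "Suc h"] Suc.prems by auto
  finally show ?case .
qed

lemma poc_perm:
  assumes B: "R_chain RR n B"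
  shows "R_perm RR n (perm_of_chain B)" "chain_of RR n (perm_of_chain B) = B"
proof -
  let ?p = "perm_of_chain B"
  have img: "?p ` {1..n} = {1..n}" using poc_prefix[OF B, of "r+1"] q_last chain_basic(2)[OF B] by simp
  have bij: "bij_betw ?p {1..n} {1..n}"
    unfolding bij_betw_def using img eq_card_imp_inj_on[of "{1..n}" ?p] by simp
  have tup: "R_tuple n ?p" unfolding R_tuple_def using img by (auto simp: perm_of_chain_def)
  have inc: "R_increasing RR n ?p"
    unfolding R_increasing_def using poc_carrel(2)[OF B] by auto
  show "R_perm RR n ?p" unfolding R_perm_def using bij tup inc by simp
  show "chain_of RR n ?p = B"
  proof
    fix h show "chain_of RR n ?p h = B h"
      using poc_prefix[OF B, of h] chain_basic(4)[OF B, of h] unfolding chain_of_def by auto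
  qed
qed

definition avoid :: "(nat \<Rightarrow> nat set) \<Rightarrow> bool" where
  "avoid B \<longleftrightarrow> (\<forall>g u v w. 1 \<le> g \<longrightarrow> g + 1 \<le> r \<longrightarrow> u \<in> B (g + 1) \<longrightarrow> u \<notin> B g \<longrightarrow> w \<in> B g
      \<longrightarrow> v \<in> {1..n} \<longrightarrow> v \<notin> B (g + 1) \<longrightarrow> \<not> (u < v \<and> v < w))"

lemma in_chain_of:
  assumes "R_perm RR n \<pi>" "h \<le> r + 1" "c \<in> {1..n}"
  shows "\<pi> c \<in> chain_of RR n \<pi> h \<longleftrightarrow> c \<le> qq h"
proof -
  note P = perm_basic[OF assms(1)]
  have "{1..qq h} \<subseteq> {1..n}" using q_le_n[OF assms(2)] by auto
  then have "\<pi> c \<in> \<pi> ` {1..qq h} \<longleftrightarrow> c \<in> {1..qq h}"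
    using inj_on_image_mem_iff[OF P(2) assms(3)] by blast
  then show ?thesis using chain_of_eq[OF assms(2)] assms(3) by simp
qed

lemma R312_iff:
  assumes "R_perm RR n \<pi>"
  shows "R312_containing RR n \<pi> \<longleftrightarrow> \<not> avoid (chain_of RR n \<pi>)"
proof
  let ?B = "chain_of RR n \<pi>"
  note P = perm_basic[OF assms]
  assume "R312_containing RR n \<pi>"
  then obtain h a b c where h: "1 \<le> h" "h \<le> r - 1" and abc: "1 \<le> a" "a \<le> qq h" "qq h < b" "b \<le> qq (h + 1)"
    "qq (h + 1) < c" "c \<le> n" "\<pi> b < \<pi> c" "\<pi> c < \<pi> a"
    unfolding R312_containing_def by auto
  have hr1: "h + 1 \<le> r" using h by simp
  have n': "qq (h + 1) \<le> n" using q_le_n hr1 by simp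
  have bn: "b \<in> {1..n}" "a \<in> {1..n}" "c \<in> {1..n}" using abc n' by auto
  have "\<pi> b \<in> ?B (h + 1)" using in_chain_of[OF assms, of "h+1" b] bn abc hr1 by simp
  moreover have "\<pi> b \<notin> ?B h" using in_chain_of[OF assms, of "h" b] bn abc hr1 by simp
  moreover have "\<pi> a \<in> ?B h" using in_chain_of[OF assms, of "h" a] bn abc hr1 by simp
  moreover have "\<pi> c \<in> {1..n}" using bn P(3) by auto
  moreover have "\<pi> c \<notin> ?B (h + 1)" using in_chain_of[OF assms, of "h+1" c] bn abc hr1 by simp
  ultimately show "\<not> avoid ?B" unfolding avoid_def using h hr1 abc by blast
next
  let ?B = "chain_of RR n \<pi>"
  note P = perm_basic[OF assms]
  assume "\<not> avoid ?B"
  then obtain g u v w where g: "1 \<le> g" "g + 1 \<le> r" and uvw: "u \<in> ?B (g + 1)" "u \<notin> ?B g" "w \<in> ?B g"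
    "v \<in> {1..n}" "v \<notin> ?B (g + 1)" "u < v" "v < w"
    unfolding avoid_def by blast
  have n': "qq (g + 1) \<le> n" using q_le_n g by simp
  obtain b where b: "b \<in> {1..qq (g + 1)}" "u = \<pi> b" using uvw chain_of_eq[of "g+1"] g by auto
  obtain a where a: "a \<in> {1..qq g}" "w = \<pi> a" using uvw chain_of_eq[of g] g by auto
  obtain c where c: "c \<in> {1..n}" "v = \<pi> c" using uvw P(3) by (metis imageE)
  have "qq g < b" using in_chain_of[OF assms, of g b] uvw b g n' by auto
  moreover have "qq (g + 1) < c" using in_chain_of[OF assms, of "g + 1" c] uvw c g by auto
  moreover have "g \<in> {1..r - 1}" using g by auto
  moreover have "1 \<le> a \<and> a \<le> qq g \<and> b \<le> qq (g + 1) \<and> c \<le> n \<and> \<pi> b < \<pi> c \<and> \<pi> c < \<pi> a"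
    using a b c uvw by auto
  ultimately show "R312_containing RR n \<pi>" unfolding R312_containing_def by blast
qed

lemma cols_len_kc:
  assumes B: "R_chain RR n B" and h: "1 \<le> h" "h \<le> r"
  shows "cols_of_length n lam (key_of_chain n lam B) (qq h) = B h"
proof -
  have eq: "1 \<le> j \<Longrightarrow> j \<le> lam 1 \<Longrightarrow> zz j = qq h \<longleftrightarrow> hc j = h" for j
    using hc[of j] q_inj[of "hc j" h] h by auto
  have "{colset n lam (key_of_chain n lam B) j | j. 1 \<le> j \<and> j \<le> lam 1 \<and> zz j = qq h} = {B h}"
    using colset_kc[OF B] eq col_ex[OF h] by auto
  then show ?thesis unfolding cols_of_length_def by simp
qed

lemma gapless_key_iff:
  assumes B: "R_chain RR n B"
  shows "gapless_key n lam (key_of_chain n lam B) \<longleftrightarrow> avoid B"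
proof -
  let ?Y = "key_of_chain n lam B"
  have cond: "(let Ch = cols_of_length n lam ?Y (qq h); Ch1 = cols_of_length n lam ?Y (qq (h + 1));
            b = Min (Ch1 - Ch); m = Max Ch
        in b \<le> m \<longrightarrow>
           (\<forall>j. 1 \<le> j \<and> j \<le> lam 1 \<and> zz j = qq (h + 1) \<longrightarrow> {b..m} \<subseteq> colset n lam ?Y j))
     \<longleftrightarrow> (Min (B (h + 1) - B h) \<le> Max (B h) \<longrightarrow> {Min (B (h + 1) - B h)..Max (B h)} \<subseteq> B (h + 1))"
    if h: "1 \<le> h" "h + 1 \<le> r" for h
  proof -
    have eq: "1 \<le> j \<Longrightarrow> j \<le> lam 1 \<Longrightarrow> zz j = qq (h + 1) \<longleftrightarrow> hc j = h + 1" for j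
      using hc[of j] q_inj[of "hc j" "h + 1"] h by auto
    obtain j0 where j0: "1 \<le> j0" "j0 \<le> lam 1" "hc j0 = h + 1" using col_ex[of "h+1"] h by auto
    have "(\<forall>j. 1 \<le> j \<and> j \<le> lam 1 \<and> zz j = qq (h + 1) \<longrightarrow> X \<subseteq> colset n lam ?Y j) \<longleftrightarrow> X \<subseteq> B (h + 1)" for X
      using eq colset_kc[OF B] j0 by metis
    then show ?thesis using cols_len_kc[OF B, of h] cols_len_kc[OF B, of "h + 1"] h by (simp add: Let_def)
  qed
  have av: "avoid B \<longleftrightarrow> (\<forall>h. 1 \<le> h \<longrightarrow> h + 1 \<le> r \<longrightarrow>
      (Min (B (h + 1) - B h) \<le> Max (B h) \<longrightarrow> {Min (B (h + 1) - B h)..Max (B h)} \<subseteq> B (h + 1)))"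
  proof
    assume A: "avoid B"
    show "\<forall>h. 1 \<le> h \<longrightarrow> h + 1 \<le> r \<longrightarrow>
      (Min (B (h + 1) - B h) \<le> Max (B h) \<longrightarrow> {Min (B (h + 1) - B h)..Max (B h)} \<subseteq> B (h + 1))"
    proof (intro allI impI subsetI)
      fix h x assume h: "1 \<le> h" "h + 1 \<le> r" and bm: "Min (B (h + 1) - B h) \<le> Max (B h)"
        and x: "x \<in> {Min (B (h + 1) - B h)..Max (B h)}"
      have fin: "finite (B h)" "finite (B (h + 1))" using chain_fin[OF B] h by auto
      have ne1: "B h \<noteq> {}" using chain_basic(3)[OF B, of h] q_pos[of h] h by auto
      have sub: "B h \<subseteq> B (h + 1)" using chain_mono[OF B, of h "h + 1"] h by simp
      have "card (B h) < card (B (h + 1))" using chain_basic(3)[OF B] q_less[of h "h+1"] h by simp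
      then have ne2: "B (h + 1) - B h \<noteq> {}" using sub by auto
      have bin: "Min (B (h + 1) - B h) \<in> B (h + 1) - B h" by (rule Min_in) (use fin ne2 in auto)
      have min: "Max (B h) \<in> B h" using Max_in fin ne1 by simp
      show "x \<in> B (h + 1)"
      proof (rule ccontr)
        assume nx: "x \<notin> B (h + 1)"
        have "x \<noteq> Min (B (h + 1) - B h)" "x \<noteq> Max (B h)" using nx bin min sub by auto
        then have "Min (B (h + 1) - B h) < x" "x < Max (B h)" using x by auto
        moreover have "x \<in> {1..n}"
        proof -
          have "Min (B (h + 1) - B h) \<in> {1..n}" "Max (B h) \<in> {1..n}" using chain_sub[OF B, of "h+1"] chain_sub[OF B, of h] bin min h by auto
          then show ?thesis using calculation by auto
        qed
        ultimately show False using A bin min nx h unfolding avoid_def by blast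
      qed
    qed
  next
    assume G: "\<forall>h. 1 \<le> h \<longrightarrow> h + 1 \<le> r \<longrightarrow>
      (Min (B (h + 1) - B h) \<le> Max (B h) \<longrightarrow> {Min (B (h + 1) - B h)..Max (B h)} \<subseteq> B (h + 1))"
    show "avoid B" unfolding avoid_def
    proof (intro allI impI notI)
      fix g u v w assume g: "1 \<le> g" "g + 1 \<le> r" and u: "u \<in> B (g + 1)" "u \<notin> B g" and w: "w \<in> B g"
        and v: "v \<in> {1..n}" "v \<notin> B (g + 1)" and uvw: "u < v \<and> v < w"
      have fin: "finite (B g)" "finite (B (g + 1))" using chain_fin[OF B] g by auto
      have "Min (B (g + 1) - B g) \<le> u" using u fin by (simp add: Min_le)
      moreover have "w \<le> Max (B g)" using w fin by simp
      ultimately have "Min (B (g + 1) - B g) \<le> Max (B g)" "v \<in> {Min (B (g + 1) - B g)..Max (B g)}" using uvw by auto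
      then have "v \<in> B (g + 1)" using G g by blast
      then show False using v by simp
    qed
  qed
  have "gapless_key n lam ?Y \<longleftrightarrow> (\<forall>h\<in>{1..r - 1}. (Min (B (h + 1) - B h) \<le> Max (B h) \<longrightarrow> {Min (B (h + 1) - B h)..Max (B h)} \<subseteq> B (h + 1)))"
  proof -
    have "gapless_key n lam ?Y \<longleftrightarrow> (\<forall>h\<in>{1..r - 1}. let Ch = cols_of_length n lam ?Y (qq h); Ch1 = cols_of_length n lam ?Y (qq (h + 1));
            b = Min (Ch1 - Ch); m = Max Ch
        in b \<le> m \<longrightarrow>
           (\<forall>j. 1 \<le> j \<and> j \<le> lam 1 \<and> zz j = qq (h + 1) \<longrightarrow> {b..m} \<subseteq> colset n lam ?Y j))"
      unfolding gapless_key_def using kc_key[OF B] by simp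
    also have "\<dots> \<longleftrightarrow> (\<forall>h\<in>{1..r - 1}. (Min (B (h + 1) - B h) \<le> Max (B h) \<longrightarrow> {Min (B (h + 1) - B h)..Max (B h)} \<subseteq> B (h + 1)))"
    proof (rule ball_cong[OF refl])
      fix h assume "h \<in> {1..r - 1}"
      then have "1 \<le> h" "h + 1 \<le> r" by auto
      then show "(let Ch = cols_of_length n lam ?Y (qq h); Ch1 = cols_of_length n lam ?Y (qq (h + 1));
            b = Min (Ch1 - Ch); m = Max Ch
        in b \<le> m \<longrightarrow>
           (\<forall>j. 1 \<le> j \<and> j \<le> lam 1 \<and> zz j = qq (h + 1) \<longrightarrow> {b..m} \<subseteq> colset n lam ?Y j))
     \<longleftrightarrow> (Min (B (h + 1) - B h) \<le> Max (B h) \<longrightarrow> {Min (B (h + 1) - B h)..Max (B h)} \<subseteq> B (h + 1))"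
        by (rule cond)
    qed
    finally show ?thesis .
  qed
  also have "\<dots> \<longleftrightarrow> avoid B"
  proof -
    have eqset: "\<And>h. h \<in> {1..r - 1} \<longleftrightarrow> 1 \<le> h \<and> h + 1 \<le> r" by auto
    show ?thesis unfolding Ball_def eqset av by blast
  qed
  finally show ?thesis .
qed

end

lemma clumpE:
  assumes "is_clump S L"
  obtains a b where "a \<le> b" "L = {a..b}" "{a..b} \<subseteq> S" "0 < a \<Longrightarrow> a - 1 \<notin> S" "Suc b \<notin> S" "Min L = a"
proof -
  from assms obtain a b where ab: "a \<le> b" "L = {a..b}" "{a..b} \<subseteq> S" "0 < a \<longrightarrow> a - 1 \<notin> S" "Suc b \<notin> S"
    unfolding is_clump_def by blast
  moreover have "Min L = a" using ab by (auto intro: Min_eqI)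
  ultimately show ?thesis using that by blast
qed

lemma clump_ex:
  assumes "finite (S::nat set)" "x \<in> S"
  shows "\<exists>L. is_clump S L \<and> x \<in> L"
proof -
  define As where "As = {y. y \<le> x \<and> {y..x} \<subseteq> S}"
  define Bs where "Bs = {y. x \<le> y \<and> {x..y} \<subseteq> S}"
  have finA: "finite As" unfolding As_def by (rule finite_subset[of _ "{..x}"]) auto
  have finB: "finite Bs" unfolding Bs_def by (rule finite_subset[OF _ assms(1)]) auto
  have xA: "x \<in> As" and xB: "x \<in> Bs" unfolding As_def Bs_def using assms by auto
  define a where "a = Min As"
  define b where "b = Max Bs"
  have aA: "a \<in> As" unfolding a_def using Min_in finA xA by blast
  have bB: "b \<in> Bs" unfolding b_def using Max_in finB xB by blast
  have "{a..b} \<subseteq> S"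
  proof
    fix y assume "y \<in> {a..b}"
    then show "y \<in> S" using aA bB unfolding As_def Bs_def by (cases "y \<le> x") auto
  qed
  moreover have "a - 1 \<notin> S" if "0 < a"
  proof
    assume "a - 1 \<in> S"
    have ax: "a \<le> x" "{a..x} \<subseteq> S" using aA unfolding As_def by auto
    have "{a - 1..x} = insert (a - 1) {a..x}" using that ax by auto
    then have "{a - 1..x} \<subseteq> S" using ax \<open>a - 1 \<in> S\<close> by auto
    then have "a - 1 \<in> As" using ax unfolding As_def by auto
    then have "a \<le> a - 1" unfolding a_def using finA by simp
    then show False using that by simp
  qed
  moreover have "Suc b \<notin> S"
  proof
    assume "Suc b \<in> S"
    have bx: "x \<le> b" "{x..b} \<subseteq> S" using bB unfolding Bs_def by auto
    have "{x..Suc b} = insert (Suc b) {x..b}" using bx by auto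
    then have "{x..Suc b} \<subseteq> S" using bx \<open>Suc b \<in> S\<close> by auto
    then have "Suc b \<in> Bs" using bx unfolding Bs_def by auto
    then have "Suc b \<le> b" unfolding b_def using finB by simp
    then show False by simp
  qed
  moreover have "a \<le> x" "x \<le> b" using aA bB unfolding As_def Bs_def by auto
  ultimately show ?thesis unfolding is_clump_def by (intro exI[of _ "{a..b}"]) auto
qed

lemma clump_cond_iff:
  assumes fin: "finite (S::nat set)" and AS: "A \<subseteq> S" and ne: "S - A \<noteq> {}"
  shows "(\<exists>L. is_clump S L \<and> \<Union>{L'. is_clump S L' \<and> Min L < Min L'} \<subseteq> S - A
            \<and> S - A \<subseteq> \<Union>{L'. is_clump S L' \<and> Min L \<le> Min L'})
     \<longleftrightarrow> (\<forall>u v w. u \<in> S \<longrightarrow> u \<notin> A \<longrightarrow> w \<in> A \<longrightarrow> v \<notin> S \<longrightarrow> \<not> (u < v \<and> v < w))"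
proof
  assume "\<exists>L. is_clump S L \<and> \<Union>{L'. is_clump S L' \<and> Min L < Min L'} \<subseteq> S - A
            \<and> S - A \<subseteq> \<Union>{L'. is_clump S L' \<and> Min L \<le> Min L'}"
  then obtain L where L: "is_clump S L" "\<Union>{L'. is_clump S L' \<and> Min L < Min L'} \<subseteq> S - A"
    "S - A \<subseteq> \<Union>{L'. is_clump S L' \<and> Min L \<le> Min L'}" by blast
  show "\<forall>u v w. u \<in> S \<longrightarrow> u \<notin> A \<longrightarrow> w \<in> A \<longrightarrow> v \<notin> S \<longrightarrow> \<not> (u < v \<and> v < w)"
  proof (intro allI impI notI)
    fix u v w assume u: "u \<in> S" "u \<notin> A" and w: "w \<in> A" and v: "v \<notin> S" and uvw: "u < v \<and> v < w"
    obtain L1 where L1: "is_clump S L1" "Min L \<le> Min L1" "u \<in> L1" using L(3) u by blast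
    obtain L2 where L2: "is_clump S L2" "w \<in> L2" using clump_ex[OF fin] w AS by blast
    have "\<not> Min L < Min L2" using L(2) L2 w by blast
    then have "Min L2 \<le> Min L1" using L1 by simp
    obtain a1 b1 where A1: "L1 = {a1..b1}" "Min L1 = a1" by (rule clumpE[OF L1(1)]) blast
    obtain a2 b2 where A2: "L2 = {a2..b2}" "{a2..b2} \<subseteq> S" "Min L2 = a2" by (rule clumpE[OF L2(1)]) blast
    have "v \<in> {a2..b2}" using A1 A2 L1 L2 \<open>Min L2 \<le> Min L1\<close> uvw by auto
    then show False using A2 v by blast
  qed
next
  assume P: "\<forall>u v w. u \<in> S \<longrightarrow> u \<notin> A \<longrightarrow> w \<in> A \<longrightarrow> v \<notin> S \<longrightarrow> \<not> (u < v \<and> v < w)"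
  define u0 where "u0 = Min (S - A)"
  have u0: "u0 \<in> S - A" unfolding u0_def using Min_in fin ne by blast
  obtain L where L: "is_clump S L" "u0 \<in> L" using clump_ex[OF fin] u0 by blast
  obtain a b where ab: "a \<le> b" "L = {a..b}" "{a..b} \<subseteq> S" "0 < a \<Longrightarrow> a - 1 \<notin> S" "Min L = a"
    by (rule clumpE[OF L(1)]) blast
  have i: "\<Union>{L'. is_clump S L' \<and> Min L < Min L'} \<subseteq> S - A"
  proof
    fix y assume "y \<in> \<Union>{L'. is_clump S L' \<and> Min L < Min L'}"
    then obtain L' where L': "is_clump S L'" "Min L < Min L'" "y \<in> L'" by blast
    obtain a' b' where ab': "L' = {a'..b'}" "{a'..b'} \<subseteq> S" "0 < a' \<Longrightarrow> a' - 1 \<notin> S" "Min L' = a'"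
      by (rule clumpE[OF L'(1)]) blast
    have gap: "a' - 1 \<notin> S" using ab' L'(2) ab by simp
    have "u0 < a' - 1"
    proof (rule ccontr)
      assume "\<not> u0 < a' - 1"
      then have "a' - 1 \<in> {a..b}" using L(2) ab ab' L'(2) by auto
      then show False using gap ab by blast
    qed
    moreover have "a' - 1 < y" using L'(3) ab' L'(2) ab by auto
    moreover have "y \<in> S" using L'(3) ab' by blast
    ultimately show "y \<in> S - A" using P u0 gap by blast
  qed
  have ii: "S - A \<subseteq> \<Union>{L'. is_clump S L' \<and> Min L \<le> Min L'}"
  proof
    fix x assume x: "x \<in> S - A"
    obtain L' where L': "is_clump S L'" "x \<in> L'" using clump_ex[OF fin] x by blast
    obtain a' b' where ab': "L' = {a'..b'}" "{a'..b'} \<subseteq> S" "Min L' = a'"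
      by (rule clumpE[OF L'(1)]) blast
    have "u0 \<le> x" unfolding u0_def using fin x by simp
    have "a \<le> a'"
    proof (rule ccontr)
      assume "\<not> a \<le> a'"
      then have "a - 1 \<in> {a'..b'}" using L'(2) ab' \<open>u0 \<le> x\<close> L(2) ab by auto
      then show False using ab' ab \<open>\<not> a \<le> a'\<close> by auto
    qed
    then show "x \<in> \<Union>{L'. is_clump S L' \<and> Min L \<le> Min L'}" using L' ab ab' by auto
  qed
  show "\<exists>L. is_clump S L \<and> \<Union>{L'. is_clump S L' \<and> Min L < Min L'} \<subseteq> S - A
            \<and> S - A \<subseteq> \<Union>{L'. is_clump S L' \<and> Min L \<le> Min L'}"
    using L(1) i ii by blast
qed

context tabx begin

lemma rcd_iff:
  assumes B: "R_chain RR n B"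
  shows "rightmost_clump_deleting RR n B \<longleftrightarrow> avoid B"
proof -
  have cond: "(\<exists>L. is_clump (B (Suc h)) L \<and> \<Union>{L'. is_clump (B (Suc h)) L' \<and> Min L < Min L'} \<subseteq> B (Suc h) - B h
            \<and> B (Suc h) - B h \<subseteq> \<Union>{L'. is_clump (B (Suc h)) L' \<and> Min L \<le> Min L'})
     \<longleftrightarrow> (\<forall>u v w. u \<in> B (Suc h) \<longrightarrow> u \<notin> B h \<longrightarrow> w \<in> B h \<longrightarrow> v \<notin> B (Suc h) \<longrightarrow> \<not> (u < v \<and> v < w))"
    if h: "1 \<le> h" "h \<le> r" for h
  proof (rule clump_cond_iff)
    show "finite (B (Suc h))" using chain_fin[OF B] h by simp
    show "B h \<subseteq> B (Suc h)" using chain_mono[OF B, of h "Suc h"] h by simp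
    have "card (B h) < card (B (Suc h))" using chain_basic(3)[OF B] q_less[of h "Suc h"] h by simp
    then show "B (Suc h) - B h \<noteq> {}" using \<open>B h \<subseteq> B (Suc h)\<close> by auto
  qed
  have last: "\<forall>u v w. u \<in> B (Suc r) \<longrightarrow> u \<notin> B r \<longrightarrow> w \<in> B r \<longrightarrow> v \<notin> B (Suc r) \<longrightarrow> \<not> (u < v \<and> v < w)"
  proof (intro allI impI notI)
    fix u v w assume "w \<in> B r" "v \<notin> B (Suc r)" "u < v \<and> v < w"
    moreover have "B r \<subseteq> {1..n}" "B (Suc r) = {1..n}" using chain_sub[OF B, of r] chain_basic(2)[OF B] by auto
    ultimately show False by auto
  qed
  have mid: "(\<forall>u v w. u \<in> B (Suc h) \<longrightarrow> u \<notin> B h \<longrightarrow> w \<in> B h \<longrightarrow> v \<notin> B (Suc h) \<longrightarrow> \<not> (u < v \<and> v < w))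
      \<longleftrightarrow> (\<forall>u v w. u \<in> B (h + 1) \<longrightarrow> u \<notin> B h \<longrightarrow> w \<in> B h \<longrightarrow> v \<in> {1..n} \<longrightarrow> v \<notin> B (h + 1) \<longrightarrow> \<not> (u < v \<and> v < w))"
    if h: "1 \<le> h" "h \<le> r" for h
  proof -
    have "B h \<subseteq> {1..n}" using chain_sub[OF B, of h] h by simp
    then have vn: "w \<in> B h \<Longrightarrow> u < v \<Longrightarrow> v < w \<Longrightarrow> v \<in> {1..n}" for u v w by fastforce
    show ?thesis
    proof
      assume L: "\<forall>u v w. u \<in> B (Suc h) \<longrightarrow> u \<notin> B h \<longrightarrow> w \<in> B h \<longrightarrow> v \<notin> B (Suc h) \<longrightarrow> \<not> (u < v \<and> v < w)"
      show "\<forall>u v w. u \<in> B (h + 1) \<longrightarrow> u \<notin> B h \<longrightarrow> w \<in> B h \<longrightarrow> v \<in> {1..n} \<longrightarrow> v \<notin> B (h + 1) \<longrightarrow> \<not> (u < v \<and> v < w)"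
        using L by simp
    next
      assume L: "\<forall>u v w. u \<in> B (h + 1) \<longrightarrow> u \<notin> B h \<longrightarrow> w \<in> B h \<longrightarrow> v \<in> {1..n} \<longrightarrow> v \<notin> B (h + 1) \<longrightarrow> \<not> (u < v \<and> v < w)"
      show "\<forall>u v w. u \<in> B (Suc h) \<longrightarrow> u \<notin> B h \<longrightarrow> w \<in> B h \<longrightarrow> v \<notin> B (Suc h) \<longrightarrow> \<not> (u < v \<and> v < w)"
      proof (intro allI impI notI)
        fix u v w assume a: "u \<in> B (Suc h)" "u \<notin> B h" "w \<in> B h" "v \<notin> B (Suc h)" "u < v \<and> v < w"
        then have "v \<in> {1..n}" using vn by blast
        moreover have "u \<in> B (h + 1)" "v \<notin> B (h + 1)" using a by simp_all
        ultimately show False using L[rule_format, of u w v] a by blast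
      qed
    qed
  qed
  have "rightmost_clump_deleting RR n B \<longleftrightarrow> (\<forall>h\<in>{1..r}. (\<forall>u v w. u \<in> B (Suc h) \<longrightarrow> u \<notin> B h \<longrightarrow> w \<in> B h \<longrightarrow> v \<notin> B (Suc h) \<longrightarrow> \<not> (u < v \<and> v < w)))"
    unfolding rightmost_clump_deleting_def using cond by auto
  also have "\<dots> \<longleftrightarrow> (\<forall>h. 1 \<le> h \<longrightarrow> h + 1 \<le> r \<longrightarrow> (\<forall>u v w. u \<in> B (Suc h) \<longrightarrow> u \<notin> B h \<longrightarrow> w \<in> B h \<longrightarrow> v \<notin> B (Suc h) \<longrightarrow> \<not> (u < v \<and> v < w)))"
  proof
    assume "\<forall>h\<in>{1..r}. (\<forall>u v w. u \<in> B (Suc h) \<longrightarrow> u \<notin> B h \<longrightarrow> w \<in> B h \<longrightarrow> v \<notin> B (Suc h) \<longrightarrow> \<not> (u < v \<and> v < w))"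
    then show "\<forall>h. 1 \<le> h \<longrightarrow> h + 1 \<le> r \<longrightarrow> (\<forall>u v w. u \<in> B (Suc h) \<longrightarrow> u \<notin> B h \<longrightarrow> w \<in> B h \<longrightarrow> v \<notin> B (Suc h) \<longrightarrow> \<not> (u < v \<and> v < w))"
      by (metis Suc_eq_plus1 Suc_leD atLeastAtMost_iff)
  next
    assume A: "\<forall>h. 1 \<le> h \<longrightarrow> h + 1 \<le> r \<longrightarrow> (\<forall>u v w. u \<in> B (Suc h) \<longrightarrow> u \<notin> B h \<longrightarrow> w \<in> B h \<longrightarrow> v \<notin> B (Suc h) \<longrightarrow> \<not> (u < v \<and> v < w))"
    show "\<forall>h\<in>{1..r}. (\<forall>u v w. u \<in> B (Suc h) \<longrightarrow> u \<notin> B h \<longrightarrow> w \<in> B h \<longrightarrow> v \<notin> B (Suc h) \<longrightarrow> \<not> (u < v \<and> v < w))"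
    proof
      fix h assume h: "h \<in> {1..r}"
      show "\<forall>u v w. u \<in> B (Suc h) \<longrightarrow> u \<notin> B h \<longrightarrow> w \<in> B h \<longrightarrow> v \<notin> B (Suc h) \<longrightarrow> \<not> (u < v \<and> v < w)"
      proof (cases "h = r")
        case True then show ?thesis using last by simp
      next
        case False then show ?thesis using A h by auto
      qed
    qed
  qed
  also have "\<dots> \<longleftrightarrow> avoid B"
    unfolding avoid_def using mid by (auto simp del: One_nat_def)
  finally show ?thesis .
qed

end

context tabx begin

definition psiB :: "(nat \<Rightarrow> nat set) \<Rightarrow> nat \<Rightarrow> nat" where
  "psiB B i = (if i \<in> {1..n} then sorted_list_of_set (B (hr i)) ! (i - 1) else 0)"

lemma Psi_eq:
  assumes P: "R_perm RR n \<pi>"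
  shows "Psi RR n \<pi> = psiB (chain_of RR n \<pi>)"
proof
  fix i
  show "Psi RR n \<pi> i = psiB (chain_of RR n \<pi>) i"
  proof (cases "i \<in> {1..n}")
    case True
    then have i: "1 \<le> i" "i \<le> n" by auto
    note H = hr[OF i]
    have th: "(THE h. h \<in> {1..r + 1} \<and> qq (h - 1) < i \<and> i \<le> qq h) = hr i"
    proof (rule the_equality)
      show "hr i \<in> {1..r + 1} \<and> qq (hr i - 1) < i \<and> i \<le> qq (hr i)" using H by simp
      fix h assume "h \<in> {1..r + 1} \<and> qq (h - 1) < i \<and> i \<le> qq h"
      then show "h = hr i" using hr_eqI[of h i] by simp
    qed
    have card: "card (chain_of RR n \<pi> (hr i)) = qq (hr i)"
      using chain_basic(3)[OF chain_of_chain[OF P]] H by simp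
    have "qq (hr i) - (qq (hr i) - i + 1) = i - 1" using H i by simp
    then show ?thesis unfolding Psi_def psiB_def rank_def using True th card by (simp add: Let_def)
  next
    case False show ?thesis unfolding Psi_def psiB_def if_not_P[OF False] by (rule refl)
  qed
qed

lemma row_end_kc:
  assumes B: "R_chain RR n B"
  shows "row_end n lam (key_of_chain n lam B) = psiB B"
proof
  fix i
  show "row_end n lam (key_of_chain n lam B) i = psiB B i"
  proof (cases "i \<in> {1..n}")
    case True
    then have i: "1 \<le> i" "i \<le> n" by auto
    show ?thesis
    proof (cases "lam i = 0")
      case True
      then have "hr i = r + 1" using hr_zero i by simp
      then show ?thesis unfolding row_end_def psiB_def using True i chain_basic(2)[OF B] sl_interval[OF i] by simp
    next
      case False
      then have l: "1 \<le> lam i" by simp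
      note R = hr_row[OF i l]
      have "in_shape n lam (lam i) i" unfolding in_shape_def using i l by simp
      then show ?thesis unfolding row_end_def psiB_def kc_eq using i False R by simp
    qed
  next
    case False show ?thesis unfolding row_end_def psiB_def if_not_P[OF False] by (rule refl)
  qed
qed

lemma find_g:
  assumes B: "R_chain RR n B" and "h' \<le> h" "u \<in> B h" "u \<notin> B h'"
  shows "\<exists>g. h' \<le> g \<and> g < h \<and> u \<in> B (Suc g) \<and> u \<notin> B g"
  using assms(2,3)
proof (induction h rule: dec_induct)
  case base then show ?case using assms(4) by simp
next
  case (step m)
  show ?case
  proof (cases "u \<in> B m")
    case True then show ?thesis using step by (meson less_SucI)
  next
    case False then show ?thesis using step by (intro exI[of _ m]) auto
  qed
qed

lemma combin:
  assumes B: "R_chain RR n B" and av: "avoid B"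
    and j: "1 \<le> j" "Suc j \<le> lam 1" and i: "1 \<le> i" "i \<le> zz (Suc j)" "i < zz j"
  shows "sorted_list_of_set (B (hc (Suc j))) ! (i - 1) \<le> sorted_list_of_set (B (hc j)) ! (i - 1)
     \<or> sorted_list_of_set (B (hc j)) ! i \<le> sorted_list_of_set (B (hc j)) ! (i - 1) + 1"
proof (rule ccontr)
  let ?h = "hc j" and ?h' = "hc (Suc j)"
  let ?C = "B ?h" and ?A = "B ?h'"
  let ?S = "sorted_list_of_set ?C"
  let ?x = "?S ! (i - 1)" and ?w = "sorted_list_of_set ?A ! (i - 1)"
  note Hj = hc[OF j(1)] hc[of "Suc j"]
  have j1: "j \<le> lam 1" using j by simp
  have h'h: "?h' \<le> ?h" using hc_anti[of j "Suc j"] j by simp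
  have hb: "1 \<le> ?h'" "?h' \<le> r + 1" "1 \<le> ?h" "?h \<le> r + 1" using hc[OF j(1) j1] hc[of "Suc j"] j by auto
  have AC: "?A \<subseteq> ?C" using chain_mono[OF B h'h] hb by simp
  have finC: "finite ?C" and finA: "finite ?A" using chain_fin[OF B] hb by auto
  have cardC: "card ?C = zz j" and cardA: "card ?A = zz (Suc j)"
    using chain_basic(3)[OF B] hb hc[OF j(1) j1] hc[of "Suc j"] j by auto
  have Csub: "?C \<subseteq> {1..n}" using chain_sub[OF B] hb by simp
  assume "\<not> ?thesis"
  then have c1: "?x < ?w" and c2: "?x + 1 < ?S ! i" by auto
  have ixC: "i - 1 < card ?C" "i < card ?C" using cardC i by auto
  have xC: "?x \<in> ?C" using sl_mem[OF finC ixC(1)] .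
  have below_x: "card {y\<in>?C. y < ?x} = i - 1" using sl_card_below[OF finC ixC(1)] .
  have le_x: "{y\<in>?C. y \<le> ?x} = insert ?x {y\<in>?C. y < ?x}" using xC by auto
  have card_le_x: "card {y\<in>?C. y \<le> ?x} = i" using le_x below_x finC i by simp
  have vC: "?x + 1 \<notin> ?C"
  proof
    assume v: "?x + 1 \<in> ?C"
    have "{y\<in>?C. y < ?x + 1} = {y\<in>?C. y \<le> ?x}" by auto
    then have "card {y\<in>?C. y < ?x + 1} = i" using card_le_x by simp
    then have "?S ! i = ?x + 1" by (rule sl_char(1)[OF finC v])
    then show False using c2 by simp
  qed
  have iA: "i - 1 < card ?A" using cardA i by simp
  have "{y\<in>?A. y \<le> ?x} \<subseteq> {y\<in>?A. y < ?w}" using c1 by auto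
  then have "card {y\<in>?A. y \<le> ?x} \<le> card {y\<in>?A. y < ?w}" by (intro card_mono) (use finA in auto)
  then have cA: "card {y\<in>?A. y \<le> ?x} \<le> i - 1" using sl_card_below[OF finA iA] by simp
  have "\<not> {y\<in>?C. y \<le> ?x} \<subseteq> {y\<in>?A. y \<le> ?x}"
  proof
    assume "{y\<in>?C. y \<le> ?x} \<subseteq> {y\<in>?A. y \<le> ?x}"
    then have "card {y\<in>?C. y \<le> ?x} \<le> card {y\<in>?A. y \<le> ?x}" using finA by (intro card_mono) auto
    then show False using cA card_le_x i by simp
  qed
  then obtain u where u: "u \<in> ?C" "u \<notin> ?A" "u \<le> ?x" by blast
  have wA: "?w \<in> ?A" using sl_mem[OF finA iA] .
  have "?w \<noteq> ?x + 1" using vC wA AC by auto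
  then have w: "?x + 1 < ?w" using c1 by linarith
  have wn: "?w \<le> n" using wA AC Csub by auto
  obtain g where g: "?h' \<le> g" "g < ?h" "u \<in> B (Suc g)" "u \<notin> B g" using find_g[OF B h'h u(1) u(2)] by blast
  have hr: "?h \<le> r"
  proof (rule ccontr)
    assume "\<not> ?h \<le> r"
    then have "?h = r + 1" using hb by simp
    then have "?C = {1..n}" using chain_basic(2)[OF B] by simp
    then show False using vC w wn by simp
  qed
  have "?w \<in> B g" using chain_mono[OF B g(1)] wA g hb by auto
  moreover have "?x + 1 \<notin> B (g + 1)" using chain_mono[OF B, of "g+1" ?h] vC g hb by auto
  moreover have "?x + 1 \<in> {1..n}" using w wn by simp
  moreover have "1 \<le> g" "g + 1 \<le> r" using g hb hr by auto
  moreover have "u \<in> B (g + 1)" "u \<notin> B g" "u < ?x + 1" using g u by auto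
  ultimately show False using av w unfolding avoid_def by blast
qed

lemma kc_max:
  assumes B: "R_chain RR n B" and av: "avoid B"
    and T: "tableau n lam T" "row_end n lam T = psiB B"
  shows "T \<le> key_of_chain n lam B"
proof -
  let ?Y = "key_of_chain n lam B"
  have RY: "row_end n lam ?Y = psiB B" by (rule row_end_kc[OF B])
  have main: "\<forall>j i. (lam 1 - j) * Suc n + (n - i) = k \<longrightarrow> in_shape n lam j i \<longrightarrow> T j i \<le> ?Y j i" for k
  proof (induction k rule: less_induct)
    case (less k)
    show ?case
    proof (intro allI impI)
      fix j i assume k: "(lam 1 - j) * Suc n + (n - i) = k" and sh: "in_shape n lam j i"
      have ji0: "1 \<le> j" "1 \<le> i" "i \<le> n" "j \<le> lam i" using sh unfolding in_shape_def by auto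
      have l1: "lam i \<le> lam 1" using lam_mono[of 1 i] ji0 by simp
      then have ji: "1 \<le> j" "1 \<le> i" "i \<le> zz j" "i \<le> n" "j \<le> lam i" "j \<le> lam 1"
        using ji0 sh in_shape_iff by auto
      show "T j i \<le> ?Y j i"
      proof (cases "j = lam i")
        case True
        have "T j i = row_end n lam T i" unfolding row_end_def using True ji by simp
        also have "\<dots> = row_end n lam ?Y i" using T(2) RY by simp
        also have "\<dots> = ?Y j i" unfolding row_end_def using True ji by simp
        finally show ?thesis by simp
      next
        case False
        then have sh1: "in_shape n lam (Suc j) i" unfolding in_shape_def using ji by simp
        have j1: "Suc j \<le> lam 1" using ji False l1 by simp
        have "lam 1 - j = Suc (lam 1 - Suc j)" using j1 by simp
        then have "(lam 1 - Suc j) * Suc n + (n - i) < k" using k by simp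
        then have IH1: "T (Suc j) i \<le> ?Y (Suc j) i" using less.IH sh1 by blast
        have TT1: "T j i \<le> T (Suc j) i" using T(1) sh sh1 unfolding tableau_def by blast
        have zS: "i \<le> zz (Suc j)" using sh1 in_shape_iff by simp
        show ?thesis
        proof (cases "i = zz j")
          case True
          then have "zz (Suc j) = zz j" using zS zeta_anti[of j "Suc j"] by simp
          then have "hc (Suc j) = hc j" using hc_eqI[of "Suc j" "hc j"] hc[of j] ji j1 by simp
          then have "?Y (Suc j) i = ?Y j i" unfolding kc_eq using sh sh1 by simp
          then show ?thesis using IH1 TT1 by simp
        next
          case False
          then have sh2: "in_shape n lam j (Suc i)" using in_shape_iff ji by simp
          have "i < n" using ji False zeta_le_n[of j] by linarith
          then have "n - Suc i < n - i" by simp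
          then have "(lam 1 - j) * Suc n + (n - Suc i) < k" using k by linarith
          then have IH2: "T j (Suc i) \<le> ?Y j (Suc i)" using less.IH sh2 by blast
          have TT2: "T j i < T j (Suc i)" using T(1) sh sh2 unfolding tableau_def by blast
          have "sorted_list_of_set (B (hc (Suc j))) ! (i - 1) \<le> sorted_list_of_set (B (hc j)) ! (i - 1)
             \<or> sorted_list_of_set (B (hc j)) ! i \<le> sorted_list_of_set (B (hc j)) ! (i - 1) + 1"
            using combin[OF B av ji(1) j1 ji(2) zS] False ji by simp
          then have "?Y (Suc j) i \<le> ?Y j i \<or> ?Y j (Suc i) \<le> ?Y j i + 1"
            unfolding kc_eq using sh sh1 sh2 by simp
          then show ?thesis using IH1 IH2 TT1 TT2 by linarith
        qed
      qed
    qed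
  qed
  have "T j i \<le> ?Y j i" for j i
  proof (cases "in_shape n lam j i")
    case True then show ?thesis using main by blast
  next
    case False then show ?thesis using T(1) unfolding tableau_def by simp
  qed
  then show ?thesis by (simp add: le_fun_def)
qed

lemma M_max_kc:
  assumes B: "R_chain RR n B" and av: "avoid B"
  shows "M_max n lam (psiB B) = key_of_chain n lam B"
  unfolding M_max_def
proof (rule Greatest_equality)
  show "tableau n lam (key_of_chain n lam B) \<and> row_end n lam (key_of_chain n lam B) = psiB B"
    using kc_key[OF B] row_end_kc[OF B] unfolding is_key_def by simp
  show "\<And>T. tableau n lam T \<and> row_end n lam T = psiB B \<Longrightarrow> T \<le> key_of_chain n lam B"
    using kc_max[OF B av] by blast
qed

end

context tabx begin

lemma psiB_carrel:
  assumes "1 \<le> h" "h \<le> r + 1" "qq (h - 1) < i" "i \<le> qq h"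
  shows "psiB B i = sorted_list_of_set (B h) ! (i - 1)"
  using hr_carrel[OF assms] unfolding psiB_def by simp

lemma chain_max:
  assumes B: "R_chain RR n B" and h: "1 \<le> h" "h \<le> r + 1" and z: "z \<in> B h"
  shows "z \<le> sorted_list_of_set (B h) ! (qq h - 1)"
proof -
  have fin: "finite (B h)" and card: "card (B h) = qq h" using chain_fin[OF B] chain_basic(3)[OF B] h by auto
  obtain k where k: "k < qq h" "sorted_list_of_set (B h) ! k = z"
    using z fin card by (metis in_set_conv_nth set_sorted_list_of_set sl_len)
  show ?thesis
  proof (cases "k = qq h - 1")
    case True then show ?thesis using k by simp
  next
    case False
    then have "k < qq h - 1" using k by simp
    then show ?thesis using sl_less[OF fin, of k "qq h - 1"] k card by simp
  qed
qed

lemma psi_gapless: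
  assumes B: "R_chain RR n B" and av: "avoid B"
  shows "gapless_tuple RR n (psiB B)"
proof -
  let ?g = "psiB B"
  have val: "?g i \<in> B (hr i) \<and> i \<le> ?g i" if i: "1 \<le> i" "i \<le> n" for i
  proof -
    note H = hr[OF i]
    have fin: "finite (B (hr i))" and card: "card (B (hr i)) = qq (hr i)" and sub: "B (hr i) \<subseteq> {1..n}"
      using chain_fin[OF B] chain_basic(3)[OF B] chain_sub[OF B] H by auto
    have k: "i - 1 < card (B (hr i))" using card H i by simp
    have "?g i = sorted_list_of_set (B (hr i)) ! (i - 1)" unfolding psiB_def using i by simp
    then show ?thesis using sl_mem[OF fin k] sl_ge_index[OF fin sub k] i by simp
  qed
  have tup: "R_tuple n ?g"
    unfolding R_tuple_def
  proof (intro conjI ballI allI impI)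
    fix i assume "i \<in> {1..n}"
    then have i: "1 \<le> i" "i \<le> n" by auto
    then show "?g i \<in> {1..n}" using val[OF i] chain_sub[OF B, of "hr i"] hr[OF i] by auto
  next
    fix i assume ni: "i \<notin> {1..n}" show "?g i = 0" unfolding psiB_def if_not_P[OF ni] by (rule refl)
  qed
  have up: "upper n ?g" unfolding upper_def using val by auto
  have inc: "R_increasing RR n ?g" unfolding R_increasing_def
  proof (intro ballI allI impI)
    fix h i j assume h: "h \<in> {1..r + 1}" and ij: "qq (h - 1) < i \<and> i < j \<and> j \<le> qq h"
    have fin: "finite (B h)" and card: "card (B h) = qq h" using chain_fin[OF B] chain_basic(3)[OF B] h by auto
    have "?g i = sorted_list_of_set (B h) ! (i - 1)" "?g j = sorted_list_of_set (B h) ! (j - 1)"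
      using psiB_carrel[of h i B] psiB_carrel[of h j B] h ij by auto
    moreover have "i - 1 < j - 1" "j - 1 < card (B h)" using ij card q0 by auto
    ultimately show "?g i < ?g j" using sl_less[OF fin] by simp
  qed
  have gap: "(let s = ?g (qq h) - ?g (qq h + 1) + 1 in
           s \<le> qq (h + 1) - qq h \<and> (\<forall>t\<in>{1..s}. ?g (qq h + t) = ?g (qq h) - s + t))"
    if h: "h \<in> {1..r}" and gt: "?g (qq h) > ?g (qq h + 1)" for h
  proof -
    have h1: "1 \<le> h" "h \<le> r" using h by auto
    have qh: "1 \<le> qq h" "qq h < qq (h + 1)" "qq (h + 1) \<le> n" using q_pos q_less q_le_n h1 by auto
    have finh: "finite (B h)" and cardh: "card (B h) = qq h" using chain_fin[OF B] chain_basic(3)[OF B] h1 by auto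
    have fin1: "finite (B (h + 1))" and card1: "card (B (h + 1)) = qq (h + 1)"
      using chain_fin[OF B] chain_basic(3)[OF B] h1 by auto
    have sub: "B h \<subseteq> B (h + 1)" using chain_mono[OF B, of h "h+1"] h1 by simp
    have sub1: "B (h + 1) \<subseteq> {1..n}" using chain_sub[OF B] h1 by simp
    define m where "m = ?g (qq h)"
    define y where "y = ?g (qq h + 1)"
    have m_eq: "m = sorted_list_of_set (B h) ! (qq h - 1)"
      unfolding m_def using psiB_carrel[of h "qq h" B] h1 q_less[of "h - 1" h] by simp
    have y_eq: "y = sorted_list_of_set (B (h + 1)) ! qq h"
      unfolding y_def using psiB_carrel[of "h + 1" "qq h + 1" B] h1 qh by simp
    have mB: "m \<in> B h" using m_eq sl_mem[OF finh, of "qq h - 1"] cardh qh by simp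
    have mmax: "z \<le> m" if "z \<in> B h" for z using chain_max[OF B, of h z] h1 that m_eq by simp
    have yB: "y \<in> B (h + 1)" using y_eq sl_mem[OF fin1, of "qq h"] card1 qh by simp
    have ybelow: "card {z\<in>B (h + 1). z < y} = qq h" using y_eq sl_card_below[OF fin1, of "qq h"] card1 qh by simp
    have my: "y < m" using gt unfolding m_def y_def by simp
    have K: "{y..m} \<subseteq> B (h + 1)"
    proof (cases "h = r")
      case True
      then have "B (h + 1) = {1..n}" using chain_basic(2)[OF B] by simp
      moreover have "1 \<le> y" "m \<le> n" using yB mB sub sub1 by auto
      ultimately show ?thesis by auto
    next
      case False
      then have hr': "h + 1 \<le> r" using h1 by simp
      show ?thesis
      proof
        fix v assume v: "v \<in> {y..m}"
        show "v \<in> B (h + 1)"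
        proof (rule ccontr)
          assume nv: "v \<notin> B (h + 1)"
          have "v \<noteq> y" "v \<noteq> m" using nv yB mB sub by auto
          then have yvm: "y < v" "v < m" using v by auto
          have c1: "card {z\<in>B (h + 1). z \<le> y} = qq h + 1"
          proof -
            have "{z\<in>B (h + 1). z \<le> y} = insert y {z\<in>B (h + 1). z < y}" using yB by auto
            then show ?thesis using ybelow fin1 by simp
          qed
          have "{z\<in>B h. z \<le> y} \<subseteq> B h - {m}" using my by auto
          then have "card {z\<in>B h. z \<le> y} \<le> card (B h - {m})" using finh by (intro card_mono) auto
          then have c2: "card {z\<in>B h. z \<le> y} \<le> qq h - 1" using cardh mB finh by simp
          have "\<not> {z\<in>B (h + 1). z \<le> y} \<subseteq> {z\<in>B h. z \<le> y}"
          proof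
            assume "{z\<in>B (h + 1). z \<le> y} \<subseteq> {z\<in>B h. z \<le> y}"
            then have "card {z\<in>B (h + 1). z \<le> y} \<le> card {z\<in>B h. z \<le> y}" using finh by (intro card_mono) auto
            then show False using c1 c2 by simp
          qed
          then obtain u where u: "u \<in> B (h + 1)" "u \<notin> B h" "u \<le> y" by blast
          have "v \<in> {1..n}" using yvm mB sub sub1 by auto
          moreover have "u < v" using u yvm by simp
          ultimately show False using av h1 hr' u mB nv yvm unfolding avoid_def by blast
        qed
      qed
    qed
    define s where "s = m - y + 1"
    have below_set: "{z\<in>B (h + 1). z < y + k} = {z\<in>B (h + 1). z < y} \<union> {y..<y + k}" if "k \<le> s" for k
    proof -
      have "{y..<y + k} \<subseteq> {y..m}" using that my unfolding s_def by auto
      then have "{y..<y + k} \<subseteq> B (h + 1)" using K by blast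
      then show ?thesis by auto
    qed
    have card_below: "card {z\<in>B (h + 1). z < y + k} = qq h + k" if "k \<le> s" for k
    proof -
      have "card ({z\<in>B (h + 1). z < y} \<union> {y..<y + k}) = card {z\<in>B (h + 1). z < y} + card {y..<y + k}"
        by (rule card_Un_disjoint) (use fin1 in auto)
      then show ?thesis using below_set[OF that] ybelow by simp
    qed
    have s_le: "s \<le> qq (h + 1) - qq h"
    proof -
      have "{z\<in>B (h + 1). z < y + s} \<subseteq> B (h + 1)" by auto
      then have "card {z\<in>B (h + 1). z < y + s} \<le> qq (h + 1)" using card1 fin1 card_mono by metis
      then show ?thesis using card_below[of s] by simp
    qed
    have vals: "?g (qq h + t) = m - s + t" if t: "t \<in> {1..s}" for t
    proof -
      have t1: "1 \<le> t" "t \<le> s" using t by auto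
      have i1: "qq h < qq h + t" "qq h + t \<le> qq (h + 1)" using t1 s_le qh by auto
      have "?g (qq h + t) = sorted_list_of_set (B (h + 1)) ! (qq h + t - 1)"
        using psiB_carrel[of "h + 1" "qq h + t" B] h1 i1 by simp
      also have "\<dots> = y + (t - 1)"
      proof (rule sl_char(1)[OF fin1])
        have "y + (t - 1) \<in> {y..m}" using t1 my unfolding s_def by auto
        then show "y + (t - 1) \<in> B (h + 1)" using K by blast
        show "card {z\<in>B (h + 1). z < y + (t - 1)} = qq h + t - 1" using card_below[of "t - 1"] t1 by simp
      qed
      also have "\<dots> = m - s + t" unfolding s_def using my t1 yB sub1 by auto
      finally show ?thesis .
    qed
    show ?thesis unfolding Let_def using s_le vals unfolding s_def m_def y_def by simp
  qed
  show ?thesis unfolding gapless_tuple_def using tup up inc gap by blast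
qed

end

context tabx begin

context
  fixes \<gamma> :: "nat \<Rightarrow> nat"
  assumes gt: "gapless_tuple RR n \<gamma>"
begin

lemma g_tuple: "R_tuple n \<gamma>" and g_upper: "upper n \<gamma>" and g_inc: "R_increasing RR n \<gamma>"
  using gt unfolding gapless_tuple_def by auto

lemma g_range: "1 \<le> i \<Longrightarrow> i \<le> n \<Longrightarrow> i \<le> \<gamma> i \<and> \<gamma> i \<le> n"
  using g_tuple g_upper unfolding R_tuple_def upper_def by auto

lemma g_out: "i \<notin> {1..n} \<Longrightarrow> \<gamma> i = 0"
  using g_tuple unfolding R_tuple_def by auto

lemma g_gap:
  assumes "1 \<le> h" "h \<le> r" "\<gamma> (qq h) > \<gamma> (qq h + 1)"
  shows "\<gamma> (qq h) - \<gamma> (qq h + 1) + 1 \<le> qq (h + 1) - qq h"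
    "\<And>t. 1 \<le> t \<Longrightarrow> t \<le> \<gamma> (qq h) - \<gamma> (qq h + 1) + 1 \<Longrightarrow>
       \<gamma> (qq h + t) = \<gamma> (qq h) - (\<gamma> (qq h) - \<gamma> (qq h + 1) + 1) + t"
  using gt assms unfolding gapless_tuple_def Let_def by auto

lemma carrel_inc:
  assumes h: "1 \<le> h" "h \<le> r + 1" and ij: "qq (h - 1) < i" "i \<le> j" "j \<le> qq h"
  shows "\<gamma> i + (j - i) \<le> \<gamma> j"
proof -
  have step: "\<gamma> k < \<gamma> (Suc k)" if "qq (h - 1) < k" "Suc k \<le> qq h" for k
    using g_inc h that unfolding R_increasing_def by auto
  have "\<gamma> i + d \<le> \<gamma> (i + d)" if "i + d \<le> qq h" for d
    using that
  proof (induction d)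
    case 0 then show ?case by simp
  next
    case (Suc d)
    then have "\<gamma> i + d \<le> \<gamma> (i + d)" by simp
    moreover have "\<gamma> (i + d) < \<gamma> (Suc (i + d))" using step[of "i + d"] ij Suc.prems by simp
    ultimately show ?case by simp
  qed
  from this[of "j - i"] show ?thesis using ij by simp
qed

definition f :: "nat \<Rightarrow> nat \<Rightarrow> nat" where
  "f h i = Min ((\<lambda>k. \<gamma> k + i - k) ` {i..qq h})"

lemma f_le:
  assumes "i \<le> k" "k \<le> qq h"
  shows "f h i \<le> \<gamma> k + i - k"
  unfolding f_def using assms by (intro Min_le) auto

lemma f_wit:
  assumes "i \<le> qq h"
  obtains k where "i \<le> k" "k \<le> qq h" "f h i = \<gamma> k + i - k"
proof -
  have "f h i \<in> (\<lambda>k. \<gamma> k + i - k) ` {i..qq h}" unfolding f_def using assms by (intro Min_in) auto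
  then show ?thesis using that by auto
qed

lemma f_ge:
  assumes "i \<le> qq h" "\<And>k. i \<le> k \<Longrightarrow> k \<le> qq h \<Longrightarrow> x \<le> \<gamma> k + i - k"
  shows "x \<le> f h i"
  using f_wit[OF assms(1)] assms(2) by metis

lemma g_ge: "1 \<le> k \<Longrightarrow> k \<le> n \<Longrightarrow> k \<le> \<gamma> k" using g_range by simp

lemma f_mono:
  assumes h: "h \<le> r + 1" and i: "1 \<le> i" "i < i'" "i' \<le> qq h"
  shows "f h i + (i' - i) \<le> f h i'"
proof -
  obtain k where k: "i' \<le> k" "k \<le> qq h" "f h i' = \<gamma> k + i' - k" using f_wit[OF i(3)] by blast
  have "f h i \<le> \<gamma> k + i - k" using f_le[of i k h] k i by simp
  moreover have "k \<le> \<gamma> k" using g_ge[of k] k i q_le_n[OF h] by simp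
  ultimately show ?thesis using k i by simp
qed

lemma f_bounds:
  assumes h: "h \<le> r + 1" and i: "1 \<le> i" "i \<le> qq h"
  shows "i \<le> f h i" "f h i \<le> \<gamma> (qq h) + i - qq h" "f h i \<le> n"
proof -
  show "i \<le> f h i"
    using f_ge[OF i(2)] g_ge q_le_n[OF h] i by (metis le_add2 le_add_diff order.trans)
  show le: "f h i \<le> \<gamma> (qq h) + i - qq h" using f_le[of i "qq h" h] i by simp
  have "\<gamma> (qq h) \<le> n" using g_range[of "qq h"] i q_le_n[OF h] by simp
  then show "f h i \<le> n" using le i by simp
qed

lemma f_carrel:
  assumes h: "1 \<le> h" "h \<le> r + 1" and i: "qq (h - 1) < i" "i \<le> qq h"
  shows "f h i = \<gamma> i"
proof (rule antisym)
  show "f h i \<le> \<gamma> i" using f_le[of i i h] i by simp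
  show "\<gamma> i \<le> f h i"
  proof (rule f_ge[OF i(2)])
    fix k assume "i \<le> k" "k \<le> qq h"
    then show "\<gamma> i \<le> \<gamma> k + i - k" using carrel_inc[OF h i(1), of k] by simp
  qed
qed

definition BB :: "nat \<Rightarrow> nat set" where
  "BB h = (if h \<le> r + 1 then f h ` {1..qq h} else {})"

lemma BB_sorted:
  assumes h: "h \<le> r + 1"
  shows "sorted_list_of_set (BB h) = map (f h) [1..<Suc (qq h)]"
proof -
  have "sorted_list_of_set (f h ` {1..qq h}) = map (f h) [1..<Suc (qq h)]"
    by (rule sl_image_mono) (use f_mono[OF h] in fastforce)
  then show ?thesis unfolding BB_def using h by simp
qed

lemma BB_card: "h \<le> r + 1 \<Longrightarrow> card (BB h) = qq h"
  using BB_sorted by (metis List.finite_set length_map length_upt diff_Suc_1 sl_len BB_def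
      finite_atLeastAtMost finite_imageI)

lemma BB_nth: "h \<le> r + 1 \<Longrightarrow> 1 \<le> i \<Longrightarrow> i \<le> qq h \<Longrightarrow> sorted_list_of_set (BB h) ! (i - 1) = f h i"
  using BB_sorted by (simp del: upt_Suc)

lemma BB_memI: "h \<le> r + 1 \<Longrightarrow> 1 \<le> i \<Longrightarrow> i \<le> qq h \<Longrightarrow> f h i \<in> BB h"
  unfolding BB_def by simp

context
  fixes h assumes h: "1 \<le> h" "h \<le> r"
begin

abbreviation "yy \<equiv> \<gamma> (qq h + 1)"
abbreviation "mm \<equiv> \<gamma> (qq h)"
abbreviation "cc \<equiv> \<gamma> (qq h + 1) - (qq h + 1)"

lemma qh: "1 \<le> qq h" "qq h < qq (h + 1)" "qq (h + 1) \<le> n"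
  using q_pos q_less q_le_n h by auto

lemma yy_ge: "qq h + 1 \<le> yy" using g_range[of "qq h + 1"] qh by simp

lemma f_next_low:
  assumes i: "1 \<le> i" "i \<le> qq h"
  shows "f (h + 1) i = min (f h i) (cc + i)"
proof (rule antisym)
  obtain k where k: "i \<le> k" "k \<le> qq h" "f h i = \<gamma> k + i - k" using f_wit[OF i(2)] by blast
  have a: "f (h + 1) i \<le> f h i" using f_le[of i k "h + 1"] k qh by simp
  have b: "f (h + 1) i \<le> cc + i" using f_le[of i "qq h + 1" "h + 1"] qh i yy_ge by simp
  show "f (h + 1) i \<le> min (f h i) (cc + i)" using a b by simp
next
  show "min (f h i) (cc + i) \<le> f (h + 1) i"
  proof (rule f_ge)
    show "i \<le> qq (h + 1)" using i qh by simp
    fix k assume k: "i \<le> k" "k \<le> qq (h + 1)"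
    show "min (f h i) (cc + i) \<le> \<gamma> k + i - k"
    proof (cases "k \<le> qq h")
      case True then show ?thesis using f_le[of i k h] k by simp
    next
      case False
      then have "\<gamma> (qq h + 1) + (k - (qq h + 1)) \<le> \<gamma> k"
        using carrel_inc[of "h + 1" "qq h + 1" k] h k by simp
      then show ?thesis using False yy_ge by simp
    qed
  qed
qed

lemma f_next_high:
  assumes i: "qq h < i" "i \<le> qq (h + 1)"
  shows "f (h + 1) i = \<gamma> i"
  using f_carrel[of "h + 1" i] h i by simp

lemma yy_in: "yy \<in> BB (h + 1)"
proof -
  have "f (h + 1) (qq h + 1) = yy" using f_next_high[of "qq h + 1"] qh by simp
  moreover have "f (h + 1) (qq h + 1) \<in> BB (h + 1)" using BB_memI[of "h + 1" "qq h + 1"] qh h by simp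
  ultimately show ?thesis by simp
qed

lemma gap_in:
  assumes "mm > yy"
  shows "{yy..mm} \<subseteq> BB (h + 1)"
proof
  fix z assume z: "z \<in> {yy..mm}"
  define t where "t = z - yy + 1"
  have t: "1 \<le> t" "t \<le> mm - yy + 1" using z unfolding t_def by auto
  have "\<gamma> (qq h + t) = mm - (mm - yy + 1) + t" using g_gap(2)[OF h assms t] .
  then have gz: "\<gamma> (qq h + t) = z" using z assms yy_ge unfolding t_def by auto
  have "qq h + t \<le> qq (h + 1)" using g_gap(1)[OF h assms] t by simp
  then have "f (h + 1) (qq h + t) = z" using f_next_high[of "qq h + t"] t gz by simp
  moreover have "qq h + t \<in> {1..qq (h + 1)}" using \<open>qq h + t \<le> qq (h + 1)\<close> t by simp
  ultimately show "z \<in> BB (h + 1)" unfolding BB_def using h by force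
qed

lemma interval_in:
  assumes i: "1 \<le> i" "i \<le> qq h" and big: "cc + i < f h i"
  shows "{cc + i..max yy mm} \<subseteq> BB (h + 1)"
proof
  fix z assume z: "z \<in> {cc + i..max yy mm}"
  show "z \<in> BB (h + 1)"
  proof (cases "z \<le> cc + qq h")
    case True
    define i' where "i' = z - cc"
    have i': "i \<le> i'" "i' \<le> qq h" "z = cc + i'" using z True unfolding i'_def by auto
    have "f h i + (i' - i) \<le> f h i'"
    proof (cases "i = i'")
      case False then show ?thesis using f_mono[of h i i'] i i' h by simp
    qed simp
    then have "cc + i' < f h i'" using big i' by simp
    then have "f (h + 1) i' = z" using f_next_low[of i'] i i' by simp
    moreover have "i' \<in> {1..qq (h + 1)}" using i i' qh by simp
    ultimately show ?thesis unfolding BB_def using h by force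
  next
    case False
    then have zy: "yy \<le> z" using yy_ge by simp
    show ?thesis
    proof (cases "z = yy")
      case True then show ?thesis using yy_in by simp
    next
      case False
      then have "yy < z" "z \<le> mm" using zy z by auto
      then show ?thesis using gap_in by auto
    qed
  qed
qed

lemma BB_nest: "BB h \<subseteq> BB (h + 1)"
proof
  fix x assume "x \<in> BB h"
  then obtain i where i: "1 \<le> i" "i \<le> qq h" "x = f h i" unfolding BB_def using h by auto
  show "x \<in> BB (h + 1)"
  proof (cases "f h i \<le> cc + i")
    case True
    then have "f (h + 1) i = x" using f_next_low[OF i(1,2)] i by simp
    moreover have "i \<in> {1..qq (h + 1)}" using i qh by simp
    ultimately show ?thesis unfolding BB_def using h by force
  next
    case False
    have "x \<le> mm" using f_bounds(2)[of h i] i h by simp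
    then have "x \<in> {cc + i..max yy mm}" using False i by simp
    then show ?thesis using interval_in[OF i(1,2)] False by auto
  qed
qed

lemma BB_max: assumes "x \<in> BB h" shows "x \<le> mm"
proof -
  obtain i where i: "1 \<le> i" "i \<le> qq h" "x = f h i" using assms h unfolding BB_def by auto
  have "f h i \<le> mm + i - qq h" using f_bounds(2)[of h i] i h by simp
  then show ?thesis using i by simp
qed

lemma BB_avoid:
  assumes hr: "h + 1 \<le> r" and u: "u \<in> BB (h + 1)" "u \<notin> BB h" and w: "w \<in> BB h"
    and v: "v \<notin> BB (h + 1)" and uvw: "u < v" "v < w"
  shows False
proof -
  obtain i where i: "1 \<le> i" "i \<le> qq (h + 1)" "u = f (h + 1) i" using u unfolding BB_def using hr by auto
  have wm: "w \<le> mm" using BB_max w by simp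
  show False
  proof (cases "i \<le> qq h")
    case False
    then have ug: "u = \<gamma> i" using f_next_high[of i] i by simp
    have "yy + (i - (qq h + 1)) \<le> \<gamma> i" using carrel_inc[of "h + 1" "qq h + 1" i] h hr i False by simp
    then have "yy \<le> u" using ug by simp
    then have "yy < v" "v < mm" using uvw wm by auto
    then have "v \<in> BB (h + 1)" using gap_in by auto
    then show False using v by simp
  next
    case True
    show False
    proof (cases "f h i \<le> cc + i")
      case True': True
      then have "u = f h i" using f_next_low[of i] i True by simp
      then have "u \<in> BB h" unfolding BB_def using h i True by force
      then show False using u by simp
    next
      case False
      then have "u = cc + i" using f_next_low[of i] i True by simp
      then have "v \<in> {cc + i..max yy mm}" using uvw wm by auto
      then have "v \<in> BB (h + 1)" using interval_in[of i] i True False by auto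
      then show False using v by simp
    qed
  qed
qed

end

lemma BB_chain: "R_chain RR n BB"
proof -
  have card: "h \<le> r + 1 \<Longrightarrow> card (BB h) = qq h" for h by (rule BB_card)
  have sub: "BB h \<subseteq> BB (Suc h)" if "h \<le> r" for h
  proof (cases "h = 0")
    case True then show ?thesis unfolding BB_def using q0 by simp
  next
    case False then show ?thesis using BB_nest[of h] that by simp
  qed
  have strict: "BB h \<subset> BB (Suc h)" if "h \<le> r" for h
    using sub[OF that] card[of h] card[of "Suc h"] q_less[of h "Suc h"] that by auto
  have last: "BB (r + 1) = {1..n}"
  proof -
    have gn: "\<gamma> n = n" using g_range[of n] n1 by simp
    have "f (r + 1) i = i" if "1 \<le> i" "i \<le> n" for i
      using f_bounds(1,2)[of "r + 1" i] that q_last gn by simp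
    then show ?thesis unfolding BB_def using q_last by (simp add: image_cong)
  qed
  show ?thesis unfolding R_chain_def using card strict last q0 by (auto simp: BB_def)
qed

lemma BB_avoid_all: "avoid BB"
  unfolding avoid_def using BB_avoid by (metis Suc_eq_plus1 Suc_leD)

lemma BB_psi: "psiB BB = \<gamma>"
proof
  fix i show "psiB BB i = \<gamma> i"
  proof (cases "i \<in> {1..n}")
    case True
    then have i: "1 \<le> i" "i \<le> n" by auto
    note H = hr[OF i]
    have "psiB BB i = f (hr i) i" unfolding psiB_def using BB_nth[of "hr i" i] H True by simp
    also have "\<dots> = \<gamma> i" using f_carrel[of "hr i" i] H by simp
    finally show ?thesis .
  next
    case False
    show ?thesis unfolding psiB_def if_not_P[OF False] using g_out[OF False] by simp
  qed
qed

end

lemma gapless_tuple_chain: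
  assumes "gapless_tuple RR n \<gamma>"
  shows "\<exists>B. R_chain RR n B \<and> avoid B \<and> psiB B = \<gamma>"
  using BB_chain[OF assms] BB_avoid_all[OF assms] BB_psi[OF assms] by blast

end

context tabx begin

lemma C3:
  assumes P: "R_perm RR n \<pi>"
  shows "\<not> R312_containing RR n \<pi> \<longleftrightarrow> gapless_key n lam (key_of_perm n lam \<pi>)"
  using key_of_perm_eq[OF P] R312_iff[OF P] gapless_key_iff[OF chain_of_chain[OF P]] by simp

lemma gk_chain:
  assumes "gapless_key n lam Y"
  shows "R_chain RR n (chain_of_key Y) \<and> avoid (chain_of_key Y) \<and> Y = key_of_chain n lam (chain_of_key Y)"
proof -
  have K: "is_key n lam Y" using assms unfolding gapless_key_def by simp
  have B: "R_chain RR n (chain_of_key Y)" by (rule chain_of_key_chain[OF K])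
  have E: "Y = key_of_chain n lam (chain_of_key Y)" by (rule key_eq_kc[OF K])
  have "avoid (chain_of_key Y)" using gapless_key_iff[OF B] assms E by simp
  then show ?thesis using B E by simp
qed

lemma C1: "{key_of_perm n lam \<pi> | \<pi>. R_perm RR n \<pi> \<and> \<not> R312_containing RR n \<pi>} = {Y. gapless_key n lam Y}"
proof
  show "{key_of_perm n lam \<pi> | \<pi>. R_perm RR n \<pi> \<and> \<not> R312_containing RR n \<pi>} \<subseteq> {Y. gapless_key n lam Y}"
    using C3 by blast
  show "{Y. gapless_key n lam Y} \<subseteq> {key_of_perm n lam \<pi> | \<pi>. R_perm RR n \<pi> \<and> \<not> R312_containing RR n \<pi>}"
  proof
    fix Y assume "Y \<in> {Y. gapless_key n lam Y}"
    then have G: "gapless_key n lam Y" by simp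
    let ?B = "chain_of_key Y"
    note BB = gk_chain[OF G]
    let ?p = "perm_of_chain ?B"
    have P: "R_perm RR n ?p" "chain_of RR n ?p = ?B" using poc_perm BB by auto
    have "key_of_perm n lam ?p = Y" using key_of_perm_eq[OF P(1)] P(2) BB by simp
    moreover have "\<not> R312_containing RR n ?p" using R312_iff[OF P(1)] P(2) BB by simp
    ultimately show "Y \<in> {key_of_perm n lam \<pi> | \<pi>. R_perm RR n \<pi> \<and> \<not> R312_containing RR n \<pi>}"
      using P(1) by (intro CollectI exI[of _ ?p]) simp
  qed
qed

lemma C4:
  assumes "R_perm RR n \<pi>" "\<not> R312_containing RR n \<pi>"
  shows "M_max n lam (Psi RR n \<pi>) = key_of_perm n lam \<pi>"
proof -
  have B: "R_chain RR n (chain_of RR n \<pi>)" by (rule chain_of_chain[OF assms(1)])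
  have A: "avoid (chain_of RR n \<pi>)" using R312_iff[OF assms(1)] assms(2) by simp
  show ?thesis using Psi_eq[OF assms(1)] M_max_kc[OF B A] key_of_perm_eq[OF assms(1)] by simp
qed

lemma C5: "bij_betw (key_of_chain n lam) {B. R_chain RR n B \<and> rightmost_clump_deleting RR n B} {Y. gapless_key n lam Y}"
  unfolding bij_betw_def
proof
  show "inj_on (key_of_chain n lam) {B. R_chain RR n B \<and> rightmost_clump_deleting RR n B}"
    by (intro inj_onI) (use kc_inj in blast)
  show "key_of_chain n lam ` {B. R_chain RR n B \<and> rightmost_clump_deleting RR n B} = {Y. gapless_key n lam Y}"
  proof
    show "key_of_chain n lam ` {B. R_chain RR n B \<and> rightmost_clump_deleting RR n B} \<subseteq> {Y. gapless_key n lam Y}"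
      using rcd_iff gapless_key_iff by auto
    show "{Y. gapless_key n lam Y} \<subseteq> key_of_chain n lam ` {B. R_chain RR n B \<and> rightmost_clump_deleting RR n B}"
    proof
      fix Y assume "Y \<in> {Y. gapless_key n lam Y}"
      then have G: "gapless_key n lam Y" by simp
      note BB = gk_chain[OF G]
      have "rightmost_clump_deleting RR n (chain_of_key Y)" using rcd_iff BB by simp
      then show "Y \<in> key_of_chain n lam ` {B. R_chain RR n B \<and> rightmost_clump_deleting RR n B}"
        using BB by (intro rev_image_eqI[of "chain_of_key Y"]) auto
    qed
  qed
qed

lemma C2: "{Y. gapless_key n lam Y} = {M_max n lam \<gamma> | \<gamma>. gapless_tuple RR n \<gamma>}"
proof
  show "{Y. gapless_key n lam Y} \<subseteq> {M_max n lam \<gamma> | \<gamma>. gapless_tuple RR n \<gamma>}"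
  proof
    fix Y assume "Y \<in> {Y. gapless_key n lam Y}"
    then have G: "gapless_key n lam Y" by simp
    note BB = gk_chain[OF G]
    have "gapless_tuple RR n (psiB (chain_of_key Y))" using psi_gapless BB by simp
    moreover have "M_max n lam (psiB (chain_of_key Y)) = Y" using M_max_kc BB by simp
    ultimately show "Y \<in> {M_max n lam \<gamma> | \<gamma>. gapless_tuple RR n \<gamma>}" by force
  qed
  show "{M_max n lam \<gamma> | \<gamma>. gapless_tuple RR n \<gamma>} \<subseteq> {Y. gapless_key n lam Y}"
  proof
    fix Y assume "Y \<in> {M_max n lam \<gamma> | \<gamma>. gapless_tuple RR n \<gamma>}"
    then obtain \<gamma> where g: "gapless_tuple RR n \<gamma>" "Y = M_max n lam \<gamma>" by blast
    obtain B where B: "R_chain RR n B" "avoid B" "psiB B = \<gamma>" using gapless_tuple_chain[OF g(1)] by blast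
    have "Y = key_of_chain n lam B" using M_max_kc[OF B(1,2)] B(3) g(2) by simp
    then show "Y \<in> {Y. gapless_key n lam Y}" using gapless_key_iff[OF B(1)] B(2) by simp
  qed
qed

lemma row_end_M:
  assumes "gapless_tuple RR n \<gamma>"
  shows "row_end n lam (M_max n lam \<gamma>) = \<gamma>"
proof -
  obtain B where B: "R_chain RR n B" "avoid B" "psiB B = \<gamma>" using gapless_tuple_chain[OF assms] by blast
  have e1: "M_max n lam (psiB B) = key_of_chain n lam B" by (rule M_max_kc[OF B(1,2)])
  have e2: "row_end n lam (key_of_chain n lam B) = psiB B" by (rule row_end_kc[OF B(1)])
  from e1 e2 have "row_end n lam (M_max n lam (psiB B)) = psiB B" by (simp only:)
  then show ?thesis unfolding B(3) .
qed

lemma C6: "bij_betw (M_max n lam) {\<gamma>. gapless_tuple RR n \<gamma>} {M_max n lam \<gamma> | \<gamma>. gapless_tuple RR n \<gamma>}"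
  unfolding bij_betw_def
proof
  show "inj_on (M_max n lam) {\<gamma>. gapless_tuple RR n \<gamma>}"
  proof (rule inj_onI)
    fix g1 g2 assume a: "g1 \<in> {\<gamma>. gapless_tuple RR n \<gamma>}" "g2 \<in> {\<gamma>. gapless_tuple RR n \<gamma>}"
      "M_max n lam g1 = M_max n lam g2"
    have r1: "row_end n lam (M_max n lam g1) = g1" using row_end_M a(1) by simp
    have r2: "row_end n lam (M_max n lam g2) = g2" using row_end_M a(2) by simp
    have "g1 = row_end n lam (M_max n lam g1)" using r1 by simp
    also have "\<dots> = row_end n lam (M_max n lam g2)" using a(3) by simp
    also have "\<dots> = g2" using r2 by simp
    finally show "g1 = g2" .
  qed
  show "M_max n lam ` {\<gamma>. gapless_tuple RR n \<gamma>} = {M_max n lam \<gamma> | \<gamma>. gapless_tuple RR n \<gamma>}" by blast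
qed

lemma main:
  "{key_of_perm n lam \<pi> | \<pi>. R_perm RR n \<pi> \<and> \<not> R312_containing RR n \<pi>} = {Y. gapless_key n lam Y}
       \<and> {Y. gapless_key n lam Y} = {M_max n lam \<gamma> | \<gamma>. gapless_tuple RR n \<gamma>}
       \<and> (\<forall>\<pi>. R_perm RR n \<pi> \<longrightarrow> (\<not> R312_containing RR n \<pi> \<longleftrightarrow> gapless_key n lam (key_of_perm n lam \<pi>)))
       \<and> (\<forall>\<pi>. R_perm RR n \<pi> \<and> \<not> R312_containing RR n \<pi> \<longrightarrow> M_max n lam (Psi RR n \<pi>) = key_of_perm n lam \<pi>)
       \<and> bij_betw (key_of_chain n lam) {B. R_chain RR n B \<and> rightmost_clump_deleting RR n B} {Y. gapless_key n lam Y}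
       \<and> bij_betw (M_max n lam) {\<gamma>. gapless_tuple RR n \<gamma>} {M_max n lam \<gamma> | \<gamma>. gapless_tuple RR n \<gamma>}"
  using C1 C2 C3 C4 C5 C6 by blast

end

theorem theorem5p2:
  fixes n :: nat and lam :: "nat \<Rightarrow> nat" and R :: "nat set"
  assumes "1 \<le> n" and "is_partition n lam"
  defines "R \<equiv> R_of n lam"
  shows "{key_of_perm n lam \<pi> | \<pi>. R_perm R n \<pi> \<and> \<not> R312_containing R n \<pi>} = {Y. gapless_key n lam Y}
       \<and> {Y. gapless_key n lam Y} = {M_max n lam \<gamma> | \<gamma>. gapless_tuple R n \<gamma>}
       \<and> (\<forall>\<pi>. R_perm R n \<pi> \<longrightarrow> (\<not> R312_containing R n \<pi> \<longleftrightarrow> gapless_key n lam (key_of_perm n lam \<pi>)))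
       \<and> (\<forall>\<pi>. R_perm R n \<pi> \<and> \<not> R312_containing R n \<pi> \<longrightarrow> M_max n lam (Psi R n \<pi>) = key_of_perm n lam \<pi>)
       \<and> bij_betw (key_of_chain n lam) {B. R_chain R n B \<and> rightmost_clump_deleting R n B} {Y. gapless_key n lam Y}
       \<and> bij_betw (M_max n lam) {\<gamma>. gapless_tuple R n \<gamma>} {M_max n lam \<gamma> | \<gamma>. gapless_tuple R n \<gamma>}"
  unfolding R_def using tabx.main[OF tabx.intro[OF assms(1,2)]] .

end
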